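(* Let $(A,X)$ be a $C^*$-operator system in $\mathcal B(H)$ and let $(\tilde A,\tilde X)$ be a unitization of $(A,X)$ in $\mathcal B(H)$. Then $\tilde A\subseteq M(A)$ and $\tilde X\subseteq M(X)$. Consequently, if $\pi:X\to\mathcal B(K)$ is a non-degenerate ccp representation of $(A,X)$ on a Hilbert space $K$, there is a unique ccp representation $\tilde\pi:\tilde X\to\mathcal B(K)$ of $(\tilde A,\tilde X)$ extending $\pi$.
   Context: A ccp map is completely contractive, $*$-preserving and completely positive. A $C^*$-operator system $(A,X)$ on $H$: norm-closed self-adjoint $A\subseteq X\subseteq\mathcal B(H)$, $A$ a $C^*$-subalgebra with $AH=H$, $X=\overline{\operatorname{span}}\,AX$; unital if $A$ is unital. A representation of $(A,X)$ on $K$ is a ccp map $\pi:X\to\mathcal B(K)$ with $\pi(ax)=\pi(a)\pi(x)$; non-degenerate if $\pi|_A$ is. $M(A)=\{m\in\mathcal B(H): mA\cup Am\subseteq A\}$, $M(X)=\{k\in\mathcal B(H):kA\cup Ak\subseteq X\}$. A unitization of $(A,X)$ is a unital $C^*$-operator system $(\tilde A,\tilde X)$ on $H$ containing $(A,X)$ such that $A$ is an ideal of $\tilde A$, $A\tilde X\subseteq X$, and $x\in\tilde X$ with $ax=0$ for all $a\in A$ implies $x=0$. *)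

theory Defs
  imports "HOL-Analysis.Analysis"
begin

text \<open>A complex Hilbert space: a real Banach space with a compatible complex scalar
multiplication and a complex inner product (linear in the second argument,
conjugate-linear in the first) inducing the norm.\<close>

class chilbert = banach +
  fixes cscale :: "complex \<Rightarrow> 'a \<Rightarrow> 'a"
  fixes cinner :: "'a \<Rightarrow> 'a \<Rightarrow> complex"
  assumes cscale_add_right: "cscale c (x + y) = cscale c x + cscale c y"
    and cscale_add_left: "cscale (c + d) x = cscale c x + cscale d x"
    and cscale_cscale: "cscale c (cscale d x) = cscale (c * d) x"
    and cscale_of_real: "cscale (complex_of_real r) x = scaleR r x"
    and cinner_add_right: "cinner x (y + z) = cinner x y + cinner x z"
    and cinner_cscale_right: "cinner x (cscale c y) = c * cinner x y"
    and cinner_commute: "cinner y x = cnj (cinner x y)"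
    and cinner_self: "cinner x x = complex_of_real ((norm x)\<^sup>2)"

instantiation complex :: chilbert
begin
definition cscale_complex :: "complex \<Rightarrow> complex \<Rightarrow> complex" where
  "cscale_complex c x = c * x"
definition cinner_complex :: "complex \<Rightarrow> complex \<Rightarrow> complex" where
  "cinner_complex x y = cnj x * y"
instance
proof
  fix x y z c d :: complex and r :: real
  show "cscale c (x + y) = cscale c x + cscale c y" by (simp add: cscale_complex_def algebra_simps)
  show "cscale (c + d) x = cscale c x + cscale d x" by (simp add: cscale_complex_def algebra_simps)
  show "cscale c (cscale d x) = cscale (c * d) x" by (simp add: cscale_complex_def algebra_simps)
  show "cscale (complex_of_real r) x = scaleR r x" by (simp add: cscale_complex_def scaleR_conv_of_real)
  show "cinner x (y + z) = cinner x y + cinner x z" by (simp add: cinner_complex_def algebra_simps)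
  show "cinner x (cscale c y) = c * cinner x y" by (simp add: cinner_complex_def cscale_complex_def algebra_simps)
  show "cinner y x = cnj (cinner x y)" by (simp add: cinner_complex_def mult.commute)
  show "cinner x x = complex_of_real ((norm x)\<^sup>2)"
    by (simp add: cinner_complex_def mult.commute complex_norm_square[symmetric])
qed
end

definition bop :: "('h::chilbert \<Rightarrow> 'h) \<Rightarrow> bool" where
  "bop T \<longleftrightarrow> (\<forall>x y. T (x + y) = T x + T y) \<and> (\<forall>c x. T (cscale c x) = cscale c (T x))
     \<and> (\<exists>B. \<forall>x. norm (T x) \<le> B * norm x)"

definition BH :: "('h::chilbert \<Rightarrow> 'h) set" where
  "BH = {T. bop T}"

definition is_adj :: "('h::chilbert \<Rightarrow> 'h) \<Rightarrow> ('h \<Rightarrow> 'h) \<Rightarrow> bool" where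
  "is_adj T S \<longleftrightarrow> (\<forall>x y. cinner (T x) y = cinner x (S y))"

definition adj :: "('h::chilbert \<Rightarrow> 'h) \<Rightarrow> ('h \<Rightarrow> 'h)" where
  "adj T = (THE S. is_adj T S)"

definition opnorm :: "('h::chilbert \<Rightarrow> 'h) \<Rightarrow> real" where
  "opnorm T = Sup ((\<lambda>x. norm (T x)) ` {x. norm x \<le> 1})"

definition zero_op :: "'h::chilbert \<Rightarrow> 'h" where
  "zero_op = (\<lambda>_. 0)"

definition op_subspace :: "('h::chilbert \<Rightarrow> 'h) set \<Rightarrow> bool" where
  "op_subspace S \<longleftrightarrow> zero_op \<in> S \<and> (\<forall>T\<in>S. \<forall>U\<in>S. (\<lambda>x. T x + U x) \<in> S)
     \<and> (\<forall>c. \<forall>T\<in>S. (\<lambda>x. cscale c (T x)) \<in> S)"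

definition selfadj_set :: "('h::chilbert \<Rightarrow> 'h) set \<Rightarrow> bool" where
  "selfadj_set S \<longleftrightarrow> (\<forall>T\<in>S. \<exists>U\<in>S. is_adj T U)"

definition op_closure :: "('h::chilbert \<Rightarrow> 'h) set \<Rightarrow> ('h \<Rightarrow> 'h) set" where
  "op_closure S = {T. bop T \<and> (\<exists>f. (\<forall>n. f n \<in> S) \<and>
      (\<lambda>n. opnorm (\<lambda>x. f n x - T x)) \<longlonglongrightarrow> 0)}"

definition op_closed :: "('h::chilbert \<Rightarrow> 'h) set \<Rightarrow> bool" where
  "op_closed S \<longleftrightarrow> op_closure S \<subseteq> S"

definition op_span :: "('h::chilbert \<Rightarrow> 'h) set \<Rightarrow> ('h \<Rightarrow> 'h) set" where
  "op_span S = {T. \<exists>(n::nat) c F. (\<forall>i<n. F i \<in> S) \<and> T = (\<lambda>x. \<Sum>i<n. cscale (c i) (F i x))}"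

definition hspan :: "'h::chilbert set \<Rightarrow> 'h set" where
  "hspan S = {y. \<exists>(n::nat) c v. (\<forall>i<n. v i \<in> S) \<and> y = (\<Sum>i<n. cscale (c i) (v i))}"

definition cstar_subalg :: "('h::chilbert \<Rightarrow> 'h) set \<Rightarrow> bool" where
  "cstar_subalg A \<longleftrightarrow> A \<subseteq> BH \<and> op_subspace A \<and> (\<forall>a\<in>A. \<forall>b\<in>A. a \<circ> b \<in> A)
     \<and> selfadj_set A \<and> op_closed A"

definition cstar_opsys :: "('h::chilbert \<Rightarrow> 'h) set \<Rightarrow> ('h \<Rightarrow> 'h) set \<Rightarrow> bool" where
  "cstar_opsys A X \<longleftrightarrow> cstar_subalg A \<and> A \<subseteq> X \<and> X \<subseteq> BH \<and> op_closed X \<and> selfadj_set X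
     \<and> closure (hspan {a \<xi> | a \<xi>. a \<in> A}) = UNIV
     \<and> X = op_closure (op_span {a \<circ> x | a x. a \<in> A \<and> x \<in> X})"

definition unital_alg :: "('h::chilbert \<Rightarrow> 'h) set \<Rightarrow> bool" where
  "unital_alg A \<longleftrightarrow> (\<exists>e\<in>A. \<forall>a\<in>A. e \<circ> a = a \<and> a \<circ> e = a)"

definition mat_app :: "nat \<Rightarrow> (nat \<Rightarrow> nat \<Rightarrow> ('h::chilbert \<Rightarrow> 'h)) \<Rightarrow> (nat \<Rightarrow> 'h) \<Rightarrow> nat \<Rightarrow> 'h" where
  "mat_app n M \<xi> i = (\<Sum>j<n. M i j (\<xi> j))"

definition vnorm2 :: "nat \<Rightarrow> (nat \<Rightarrow> 'h::chilbert) \<Rightarrow> real" where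
  "vnorm2 n \<xi> = (\<Sum>i<n. (norm (\<xi> i))\<^sup>2)"

definition matnorm :: "nat \<Rightarrow> (nat \<Rightarrow> nat \<Rightarrow> ('h::chilbert \<Rightarrow> 'h)) \<Rightarrow> real" where
  "matnorm n M = Sup {sqrt (vnorm2 n (mat_app n M \<xi>)) | \<xi>. vnorm2 n \<xi> \<le> 1}"

definition mat_pos :: "nat \<Rightarrow> (nat \<Rightarrow> nat \<Rightarrow> ('h::chilbert \<Rightarrow> 'h)) \<Rightarrow> bool" where
  "mat_pos n M \<longleftrightarrow> (\<forall>\<xi>. Im (\<Sum>i<n. cinner (\<xi> i) (mat_app n M \<xi> i)) = 0
                         \<and> 0 \<le> Re (\<Sum>i<n. cinner (\<xi> i) (mat_app n M \<xi> i)))"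

definition ccp :: "('h::chilbert \<Rightarrow> 'h) set \<Rightarrow> (('h \<Rightarrow> 'h) \<Rightarrow> ('k::chilbert \<Rightarrow> 'k)) \<Rightarrow> bool" where
  "ccp X \<pi> \<longleftrightarrow> (\<forall>x\<in>X. bop (\<pi> x))
     \<and> (\<forall>x\<in>X. \<forall>y\<in>X. \<pi> (\<lambda>\<xi>. x \<xi> + y \<xi>) = (\<lambda>\<eta>. \<pi> x \<eta> + \<pi> y \<eta>))
     \<and> (\<forall>c. \<forall>x\<in>X. \<pi> (\<lambda>\<xi>. cscale c (x \<xi>)) = (\<lambda>\<eta>. cscale c (\<pi> x \<eta>)))
     \<and> (\<forall>x\<in>X. \<pi> (adj x) = adj (\<pi> x))
     \<and> (\<forall>n M. (\<forall>i<n. \<forall>j<n. M i j \<in> X) \<longrightarrow> matnorm n (\<lambda>i j. \<pi> (M i j)) \<le> matnorm n M)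
     \<and> (\<forall>n M. (\<forall>i<n. \<forall>j<n. M i j \<in> X) \<longrightarrow> mat_pos n M \<longrightarrow> mat_pos n (\<lambda>i j. \<pi> (M i j)))"

definition opsys_rep :: "('h::chilbert \<Rightarrow> 'h) set \<Rightarrow> ('h \<Rightarrow> 'h) set \<Rightarrow> (('h \<Rightarrow> 'h) \<Rightarrow> ('k::chilbert \<Rightarrow> 'k)) \<Rightarrow> bool" where
  "opsys_rep A X \<pi> \<longleftrightarrow> ccp X \<pi> \<and> (\<forall>a\<in>A. \<forall>x\<in>X. \<pi> (a \<circ> x) = \<pi> a \<circ> \<pi> x)"

definition nondegenerate :: "('h::chilbert \<Rightarrow> 'h) set \<Rightarrow> (('h \<Rightarrow> 'h) \<Rightarrow> ('k::chilbert \<Rightarrow> 'k)) \<Rightarrow> bool" where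
  "nondegenerate A \<pi> \<longleftrightarrow> closure (hspan {\<pi> a \<eta> | a \<eta>. a \<in> A}) = UNIV"

definition mult_alg :: "('h::chilbert \<Rightarrow> 'h) set \<Rightarrow> ('h \<Rightarrow> 'h) set" where
  "mult_alg A = {m. bop m \<and> (\<forall>a\<in>A. m \<circ> a \<in> A \<and> a \<circ> m \<in> A)}"

definition mult_sys :: "('h::chilbert \<Rightarrow> 'h) set \<Rightarrow> ('h \<Rightarrow> 'h) set \<Rightarrow> ('h \<Rightarrow> 'h) set" where
  "mult_sys A X = {k. bop k \<and> (\<forall>a\<in>A. k \<circ> a \<in> X \<and> a \<circ> k \<in> X)}"

definition unitization :: "('h::chilbert \<Rightarrow> 'h) set \<Rightarrow> ('h \<Rightarrow> 'h) set \<Rightarrow> ('h \<Rightarrow> 'h) set \<Rightarrow> ('h \<Rightarrow> 'h) set \<Rightarrow> bool" where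
  "unitization A X At Xt \<longleftrightarrow> cstar_opsys At Xt \<and> unital_alg At \<and> A \<subseteq> At \<and> X \<subseteq> Xt
     \<and> (\<forall>a\<in>A. \<forall>b\<in>At. a \<circ> b \<in> A \<and> b \<circ> a \<in> A)
     \<and> (\<forall>a\<in>A. \<forall>x\<in>Xt. a \<circ> x \<in> X)
     \<and> (\<forall>x\<in>Xt. (\<forall>a\<in>A. a \<circ> x = zero_op) \<longrightarrow> x = zero_op)"

end

theory Submission
  imports Defs
begin


section \<open>Basic Hilbert space facts\<close>

lemma cinner_add_left: "cinner (x + y) (z::'a::chilbert) = cinner x z + cinner y z"
  by (metis cinner_add_right cinner_commute complex_cnj_add)

lemma cinner_cscale_left: "cinner (cscale c x) (y::'a::chilbert) = cnj c * cinner x y"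
  by (metis cinner_commute cinner_cscale_right complex_cnj_mult)

lemma cinner_zero_right[simp]: "cinner (x::'a::chilbert) 0 = 0"
  using cinner_add_right[of x 0 0] by simp

lemma cinner_zero_left[simp]: "cinner 0 (x::'a::chilbert) = 0"
  using cinner_add_left[of 0 0 x] by simp

lemma cinner_minus_right: "cinner (x::'a::chilbert) (- y) = - cinner x y"
  using cinner_add_right[of x y "-y"] by (metis add.commute add.right_neutral eq_neg_iff_add_eq_0 right_minus cinner_zero_right)

lemma cinner_minus_left: "cinner (- x) (y::'a::chilbert) = - cinner x y"
  using cinner_add_left[of x "-x" y] by (metis add.commute add.right_neutral eq_neg_iff_add_eq_0 right_minus cinner_zero_left)

lemma cinner_diff_right: "cinner (x::'a::chilbert) (y - z) = cinner x y - cinner x z"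
  using cinner_add_right[of x y "-z"] cinner_minus_right[of x z] by simp

lemma cinner_diff_left: "cinner (x - y) (z::'a::chilbert) = cinner x z - cinner y z"
  using cinner_add_left[of x "-y" z] cinner_minus_left[of y z] by simp

lemma cinner_sum_right: "cinner (x::'a::chilbert) (\<Sum>i\<in>F. f i) = (\<Sum>i\<in>F. cinner x (f i))"
  by (induction F rule: infinite_finite_induct) (auto simp: cinner_add_right)

lemma cinner_sum_left: "cinner (\<Sum>i\<in>F. f i) (x::'a::chilbert) = (\<Sum>i\<in>F. cinner (f i) x)"
  by (induction F rule: infinite_finite_induct) (auto simp: cinner_add_left)

lemma cscale_zero_right[simp]: "cscale c (0::'a::chilbert) = 0"
  using cscale_add_right[of c 0 0] by simp

lemma cscale_zero_left[simp]: "cscale 0 (x::'a::chilbert) = 0"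
  using cscale_of_real[of 0 x] by simp

lemma cscale_one[simp]: "cscale 1 (x::'a::chilbert) = x"
  using cscale_of_real[of 1 x] by simp

lemma cscale_minus_right: "cscale c (- x) = - cscale c (x::'a::chilbert)"
  using cscale_add_right[of c x "-x"] by (metis add.commute add.right_neutral eq_neg_iff_add_eq_0 right_minus cscale_zero_right)

lemma cscale_diff_right: "cscale c (x - y) = cscale c x - cscale c (y::'a::chilbert)"
  using cscale_add_right[of c x "-y"] cscale_minus_right[of c y] by simp

lemma cscale_sum_right: "cscale c (\<Sum>i\<in>F. f i) = (\<Sum>i\<in>F. cscale c (f i::'a::chilbert))"
  by (induction F rule: infinite_finite_induct) (auto simp: cscale_add_right)

lemma cscale_scaleR: "cscale c (scaleR r x) = scaleR r (cscale c (x::'a::chilbert))"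
  by (metis cscale_cscale cscale_of_real mult.commute)

lemma cinner_self_Re: "Re (cinner x x) = (norm (x::'a::chilbert))\<^sup>2"
  by (simp add: cinner_self)

lemma cinner_self_Im: "Im (cinner x (x::'a::chilbert)) = 0"
  by (simp add: cinner_self)

lemma cinner_self_zero_iff: "cinner x x = 0 \<longleftrightarrow> (x::'a::chilbert) = 0"
  by (simp add: cinner_self)

lemma norm_cscale: "norm (cscale c (x::'a::chilbert)) = cmod c * norm x"
proof -
  have "cinner (cscale c x) (cscale c x) = cnj c * c * cinner x x"
    by (simp add: cinner_cscale_left cinner_cscale_right)
  then have "complex_of_real ((norm (cscale c x))\<^sup>2) = cnj c * c * complex_of_real ((norm x)\<^sup>2)"
    by (simp only: cinner_self)
  also have "cnj c * c = complex_of_real ((cmod c)\<^sup>2)"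
    using complex_norm_square[of c] by (simp add: mult.commute)
  finally have "(norm (cscale c x))\<^sup>2 = ((cmod c) * norm x)\<^sup>2"
    by (metis of_real_eq_iff of_real_mult power_mult_distrib)
  then show ?thesis by (simp add: power2_eq_iff_nonneg)
qed

lemma norm_add_sq: "(norm (x + y))\<^sup>2 = (norm x)\<^sup>2 + (norm y)\<^sup>2 + 2 * Re (cinner x (y::'a::chilbert))"
proof -
  have "cinner (x+y) (x+y) = cinner x x + cinner y y + (cinner x y + cinner y x)"
    by (simp only: cinner_add_left cinner_add_right ac_simps)
  also have "cinner y x = cnj (cinner x y)" by (rule cinner_commute)
  finally have "cinner (x+y) (x+y) = cinner x x + cinner y y + (cinner x y + cnj (cinner x y))" .
  then have "Re (cinner (x+y) (x+y)) = Re (cinner x x) + Re (cinner y y) + 2 * Re (cinner x y)"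
    by simp
  then show ?thesis by (simp add: cinner_self_Re)
qed

lemma cinner_scaleR_right: "cinner x (scaleR r y) = complex_of_real r * cinner x (y::'a::chilbert)"
  using cinner_cscale_right[of x "complex_of_real r" y] by (simp only: cscale_of_real)

lemma cinner_scaleR_left: "cinner (scaleR r x) y = complex_of_real r * cinner x (y::'a::chilbert)"
  using cinner_cscale_left[of "complex_of_real r" x y] by (simp only: cscale_of_real complex_cnj_complex_of_real)

lemma Cauchy_Schwarz_c: "cmod (cinner x y) \<le> norm x * norm (y::'a::chilbert)"
proof (cases "y = 0")
  case True then show ?thesis by simp
next
  case False
  define z where "z = cinner x y"
  define c where "c = (if z = 0 then 1 else - cnj z / complex_of_real (cmod z))"
  have cz: "c * z = - complex_of_real (cmod z)"
    using complex_norm_square[of z]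
    by (auto simp: c_def field_simps power2_eq_square mult.commute)
  define y' where "y' = cscale c y"
  have cm: "cmod c = 1"
    by (auto simp: c_def norm_divide)
  have ny': "norm y' = norm y" by (simp add: y'_def norm_cscale cm)
  have xy': "cinner x y' = - complex_of_real (cmod z)"
    by (simp add: y'_def cinner_cscale_right z_def[symmetric] cz)
  have ny: "norm y > 0" using False by simp
  define t where "t = cmod z / (norm y)\<^sup>2"
  have "0 \<le> (norm (x + scaleR t y'))\<^sup>2" by simp
  also have "\<dots> = (norm x)\<^sup>2 + t\<^sup>2 * (norm y)\<^sup>2 - 2 * t * cmod z"
    by (simp add: norm_add_sq cinner_scaleR_right xy' ny' power_mult_distrib)
  also have "\<dots> = (norm x)\<^sup>2 - (cmod z)\<^sup>2 / (norm y)\<^sup>2"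
    using ny by (simp add: t_def field_simps power2_eq_square)
  finally have "(cmod z)\<^sup>2 \<le> (norm x)\<^sup>2 * (norm y)\<^sup>2"
    using ny by (simp add: field_simps)
  then have "(cmod z)\<^sup>2 \<le> (norm x * norm y)\<^sup>2" by (simp add: power_mult_distrib)
  then show ?thesis unfolding z_def
    by (rule power2_le_imp_le) simp
qed

lemma bounded_bilinear_cinner: "bounded_bilinear (cinner :: 'a::chilbert \<Rightarrow> 'a \<Rightarrow> complex)"
proof
  fix a a' b b' :: 'a and r :: real
  show "cinner (a + a') b = cinner a b + cinner a' b" by (rule cinner_add_left)
  show "cinner a (b + b') = cinner a b + cinner a b'" by (rule cinner_add_right)
  show "cinner (scaleR r a) b = scaleR r (cinner a b)" by (simp add: cinner_scaleR_left scaleR_conv_of_real)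
  show "cinner a (scaleR r b) = scaleR r (cinner a b)" by (simp add: cinner_scaleR_right scaleR_conv_of_real)
next
  show "\<exists>K. \<forall>a b. norm (cinner a b) \<le> norm a * norm (b::'a) * K"
    by (rule exI[of _ 1]) (simp add: Cauchy_Schwarz_c)
qed

lemmas tendsto_cinner = bounded_bilinear.tendsto[OF bounded_bilinear_cinner]
lemmas continuous_cinner = bounded_bilinear.continuous[OF bounded_bilinear_cinner]

lemma bounded_linear_cscale: "bounded_linear (cscale c :: 'a::chilbert \<Rightarrow> 'a)"
proof
  fix x y :: 'a and r :: real
  show "cscale c (x + y) = cscale c x + cscale c y" by (rule cscale_add_right)
  show "cscale c (scaleR r x) = scaleR r (cscale c x)" by (rule cscale_scaleR)
  show "\<exists>K. \<forall>x. norm (cscale c (x::'a)) \<le> norm x * K"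
    by (rule exI[of _ "cmod c"]) (simp add: norm_cscale mult.commute)
qed

lemmas tendsto_cscale = bounded_linear.tendsto[OF bounded_linear_cscale]

section \<open>Bounded operators\<close>

lemma bopD_add: "bop T \<Longrightarrow> T (x + y) = T x + T y"
  by (simp add: bop_def)

lemma bopD_cscale: "bop T \<Longrightarrow> T (cscale c x) = cscale c (T x)"
  by (simp add: bop_def)

lemma bop_bound: "bop T \<Longrightarrow> \<exists>B\<ge>0. \<forall>x. norm (T x) \<le> B * norm x"
  unfolding bop_def
  by (metis dual_order.trans mult_right_mono nle_le norm_ge_zero)

lemma bop_bounded_linear: "bop T \<Longrightarrow> bounded_linear T"
proof -
  assume b: "bop T"
  then obtain B where B: "B \<ge> 0" "\<forall>x. norm (T x) \<le> B * norm x" using bop_bound by blast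
  show ?thesis
  proof
    fix x y and r :: real
    show "T (x + y) = T x + T y" using b by (simp add: bopD_add)
    show "T (scaleR r x) = scaleR r (T x)" using b bopD_cscale[of T "complex_of_real r" x]
      by (simp add: cscale_of_real)
    show "\<exists>K. \<forall>x. norm (T x) \<le> norm x * K" using B by (metis mult.commute)
  qed
qed

lemma bop_zero: "bop T \<Longrightarrow> T 0 = 0"
  using bopD_add[of T 0 0] by simp

lemma bop_minus: "bop T \<Longrightarrow> T (- x) = - T x"
  using bopD_add[of T x "-x"] bop_zero[of T] by (metis add.commute add.right_neutral eq_neg_iff_add_eq_0 right_minus)

lemma bop_diff: "bop T \<Longrightarrow> T (x - y) = T x - T y"
  using bopD_add[of T x "-y"] bop_minus[of T y] by simp

lemma bop_sum: "bop T \<Longrightarrow> T (\<Sum>i\<in>F. f i) = (\<Sum>i\<in>F. T (f i))"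
  by (induction F rule: infinite_finite_induct) (auto simp: bop_zero bopD_add)

lemma bop_tendsto: "bop T \<Longrightarrow> (f \<longlongrightarrow> l) F \<Longrightarrow> ((\<lambda>n. T (f n)) \<longlongrightarrow> T l) F"
  by (rule bounded_linear.tendsto[OF bop_bounded_linear])

lemma bop_continuous_on: "bop T \<Longrightarrow> continuous_on S T"
  using bop_bounded_linear linear_continuous_on by blast

lemma bop_comp: "bop S \<Longrightarrow> bop T \<Longrightarrow> bop (S \<circ> T)"
proof -
  assume s: "bop S" and t: "bop T"
  obtain B where B: "B\<ge>0" "\<forall>x. norm (S x) \<le> B * norm x" using bop_bound[OF s] by blast
  obtain C where C: "C\<ge>0" "\<forall>x. norm (T x) \<le> C * norm x" using bop_bound[OF t] by blast
  have "norm (S (T x)) \<le> (B * C) * norm x" for x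
    using B C by (metis mult.assoc mult_left_mono order_trans)
  then have b: "\<forall>x. norm ((S \<circ> T) x) \<le> (B * C) * norm x" by simp
  have "\<forall>x y. (S \<circ> T) (x + y) = (S \<circ> T) x + (S \<circ> T) y" using s t by (simp add: bopD_add)
  moreover have "\<forall>c x. (S \<circ> T) (cscale c x) = cscale c ((S \<circ> T) x)" using s t by (simp add: bopD_cscale)
  ultimately show ?thesis using b unfolding bop_def by blast
qed

lemma bop_id: "bop (\<lambda>x. x)"
  unfolding bop_def by (intro conjI allI exI[of _ 1]) auto

lemma bop_add: "bop S \<Longrightarrow> bop T \<Longrightarrow> bop (\<lambda>x. S x + T x)"
proof -
  assume s: "bop S" and t: "bop T"
  obtain B where B: "B\<ge>0" "\<forall>x. norm (S x) \<le> B * norm x" using bop_bound[OF s] by blast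
  obtain C where C: "C\<ge>0" "\<forall>x. norm (T x) \<le> C * norm x" using bop_bound[OF t] by blast
  have "norm (S x + T x) \<le> (B + C) * norm x" for x
    using B C norm_triangle_ineq[of "S x" "T x"] by (simp add: distrib_right) (smt (verit))
  then have b: "\<forall>x. norm (S x + T x) \<le> (B + C) * norm x" by blast
  have "\<forall>x y. S (x + y) + T (x + y) = (S x + T x) + (S y + T y)" using s t by (simp add: bopD_add algebra_simps)
  moreover have "\<forall>c x. S (cscale c x) + T (cscale c x) = cscale c (S x + T x)" using s t by (simp add: bopD_cscale cscale_add_right)
  ultimately show ?thesis using b unfolding bop_def by blast
qed

lemma bop_cscale: "bop T \<Longrightarrow> bop (\<lambda>x. cscale c (T x))"
proof -
  assume t: "bop T"
  obtain C where C: "C\<ge>0" "\<forall>x. norm (T x) \<le> C * norm x" using bop_bound[OF t] by blast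
  have "norm (cscale c (T x)) \<le> (cmod c * C) * norm x" for x
    using C by (simp add: norm_cscale mult.assoc mult_left_mono)
  then have b: "\<forall>x. norm (cscale c (T x)) \<le> (cmod c * C) * norm x" by blast
  have "\<forall>x y. cscale c (T (x + y)) = cscale c (T x) + cscale c (T y)" using t by (simp add: bopD_add cscale_add_right)
  moreover have "\<forall>d x. cscale c (T (cscale d x)) = cscale d (cscale c (T x))" using t by (simp add: bopD_cscale cscale_cscale mult.commute)
  ultimately show ?thesis using b unfolding bop_def by blast
qed

lemma bop_zero_op: "bop zero_op"
  unfolding bop_def zero_op_def by (intro conjI allI exI[of _ 0]) auto

lemma bop_minus_op: "bop T \<Longrightarrow> bop (\<lambda>x. - T x)"
proof -
  assume "bop T"
  then have "bop (\<lambda>x. cscale (-1) (T x))" by (rule bop_cscale)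
  moreover have e: "\<And>x. cscale (-1) x = - x" using cscale_of_real[of "-1"] by simp
  moreover have eq: "(\<lambda>x. cscale (-1) (T x)) = (\<lambda>x. - T x)" by (rule ext) (rule e)
  ultimately show ?thesis by (simp only: eq)
qed

lemma bop_diff_op: "bop S \<Longrightarrow> bop T \<Longrightarrow> bop (\<lambda>x. S x - T x)"
proof -
  assume "bop S" "bop T"
  then have "bop (\<lambda>x. S x + (\<lambda>x. - T x) x)" by (intro bop_add bop_minus_op)
  moreover have "(\<lambda>x. S x + (\<lambda>x. - T x) x) = (\<lambda>x. S x - T x)" by (rule ext) simp
  ultimately show ?thesis by (simp only:)
qed

lemma bop_sum_op: "(\<And>i. i \<in> F \<Longrightarrow> bop (f i)) \<Longrightarrow> bop (\<lambda>x. \<Sum>i\<in>F. f i x)"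
proof (induction F rule: infinite_finite_induct)
  case (infinite F) then show ?case using bop_zero_op by (simp add: zero_op_def)
next
  case empty then show ?case using bop_zero_op by (simp add: zero_op_def)
next
  case (insert i F)
  then have "bop (\<lambda>x. f i x + (\<lambda>x. \<Sum>i\<in>F. f i x) x)" by (intro bop_add) auto
  moreover have "(\<lambda>x. f i x + (\<lambda>x. \<Sum>i\<in>F. f i x) x) = (\<lambda>x. \<Sum>i\<in>insert i F. f i x)"
    using insert.hyps by (simp add: sum.insert)
  ultimately show ?case by (simp only:)
qed


lemma sum_split_add: "(\<Sum>i<(n::nat)+m. g i) = (\<Sum>i<n. g i) + (\<Sum>i<m. g (n+i))"
  by (induction m) (simp_all add: add.assoc)

section \<open>Operator norm\<close>

lemma opnorm_bdd: "bop T \<Longrightarrow> bdd_above ((\<lambda>x. norm (T x)) ` {x. norm x \<le> 1})"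
proof -
  assume "bop T"
  then obtain B where B: "B\<ge>0" "\<forall>x. norm (T x) \<le> B * norm x" using bop_bound by blast
  have "norm (T x) \<le> B" if "norm x \<le> 1" for x
    using B that by (metis mult_left_le order_trans)
  then show ?thesis by (intro bdd_aboveI[of _ B]) auto
qed

lemma opnorm_upper: "bop T \<Longrightarrow> norm x \<le> 1 \<Longrightarrow> norm (T x) \<le> opnorm T"
  unfolding opnorm_def by (rule cSup_upper) (auto intro: opnorm_bdd)

lemma opnorm_nonneg: "bop T \<Longrightarrow> 0 \<le> opnorm T"
  using opnorm_upper[of T 0] by (simp add: bop_zero)

lemma opnorm_le: "bop T \<Longrightarrow> norm (T x) \<le> opnorm T * norm x"
proof (cases "x = 0")
  case True
  assume "bop T" then show ?thesis using True by (simp add: bop_zero)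
next
  case False
  assume b: "bop T"
  define y where "y = scaleR (1 / norm x) x"
  have ny: "norm y = 1" using False by (simp add: y_def)
  have "T y = scaleR (1 / norm x) (T x)"
    using bop_bounded_linear[OF b] by (simp add: y_def linear_simps)
  then have "norm (T x) = norm x * norm (T y)" using False by simp
  moreover have "norm (T y) \<le> opnorm T" using opnorm_upper[OF b] ny by simp
  then have "norm x * norm (T y) \<le> norm x * opnorm T" by (rule mult_left_mono) simp
  ultimately show ?thesis by (simp add: mult.commute)
qed

lemma opnorm_least:
  assumes B: "B \<ge> 0" and le: "\<And>x. norm (T x) \<le> B * norm x"
  shows "opnorm T \<le> B"
  unfolding opnorm_def
proof (rule cSup_least)
  show "(\<lambda>x. norm (T x)) ` {x. norm x \<le> 1} \<noteq> {}" using norm_zero by (metis (mono_tags) empty_iff image_eqI mem_Collect_eq zero_le_one)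
  fix r assume "r \<in> (\<lambda>x. norm (T x)) ` {x. norm x \<le> 1}"
  then obtain x where x: "norm x \<le> 1" "r = norm (T x)" by auto
  have "B * norm x \<le> B * 1" using x(1) B by (rule mult_left_mono)
  then show "r \<le> B" using le[of x] x(2) by simp
qed

section \<open>Adjoints\<close>

lemma is_adj_unique:
  assumes "is_adj T S1" "is_adj T S2" shows "S1 = S2"
proof
  fix y
  have "cinner x (S1 y - S2 y) = 0" for x
    using assms unfolding is_adj_def by (simp add: cinner_diff_right)
  then have "cinner (S1 y - S2 y) (S1 y - S2 y) = 0" by blast
  then show "S1 y = S2 y" by (simp add: cinner_self_zero_iff)
qed

lemma adj_eq: "is_adj T S \<Longrightarrow> adj T = S"
  unfolding adj_def using is_adj_unique by blast

lemma is_adj_sym: "is_adj T S \<Longrightarrow> is_adj S T"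
  unfolding is_adj_def by (metis cinner_commute)

lemma is_adj_comp: "is_adj T T' \<Longrightarrow> is_adj S S' \<Longrightarrow> is_adj (T \<circ> S) (S' \<circ> T')"
  unfolding is_adj_def by simp

lemma is_adj_adj: "is_adj T S \<Longrightarrow> is_adj T (adj T)"
  using adj_eq by metis

lemma selfadjD: "selfadj_set X \<Longrightarrow> T \<in> X \<Longrightarrow> is_adj T (adj T) \<and> adj T \<in> X"
  unfolding selfadj_set_def using adj_eq by metis

lemma adj_adj: "is_adj T (adj T) \<Longrightarrow> adj (adj T) = T"
  using adj_eq is_adj_sym by metis

section \<open>Spans and closures of operator sets\<close>

lemma op_spanI:
  assumes "\<And>i. i < (n::nat) \<Longrightarrow> F i \<in> S"
  shows "(\<lambda>x. \<Sum>i<n. cscale (c i) (F i x)) \<in> op_span S"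
  unfolding op_span_def mem_Collect_eq
  by (rule exI[where x=n], rule exI[where x=c], rule exI[where x=F]) (use assms in auto)

lemma bop_comp2: "bop S \<Longrightarrow> bop T \<Longrightarrow> bop (\<lambda>x. S (T x))"
  using bop_comp[of S T] by (simp add: comp_def)

lemma op_span_bop: "S \<subseteq> BH \<Longrightarrow> T \<in> op_span S \<Longrightarrow> bop T"
  unfolding op_span_def BH_def
  by (auto intro!: bop_sum_op bop_cscale)

lemma op_span_add:
  assumes "T \<in> op_span S" "U \<in> op_span S"
  shows "(\<lambda>x. T x + U x) \<in> op_span S"
proof -
  obtain n :: nat and c F where T: "\<forall>i<n. F i \<in> S" "T = (\<lambda>x. \<Sum>i<n. cscale (c i) (F i x))"
    using assms(1) unfolding op_span_def by blast
  obtain m :: nat and d G where U: "\<forall>i<m. G i \<in> S" "U = (\<lambda>x. \<Sum>i<m. cscale (d i) (G i x))"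
    using assms(2) unfolding op_span_def by blast
  define c' where "c' i = (if i < n then c i else d (i - n))" for i
  define F' where "F' i = (if i < n then F i else G (i - n))" for i
  have "(\<lambda>x. T x + U x) = (\<lambda>x. \<Sum>i<n+m. cscale (c' i) (F' i x))"
    unfolding sum_split_add T(2) U(2) c'_def F'_def by (auto intro!: sum.cong)
  moreover have "(\<lambda>x. \<Sum>i<n+m. cscale (c' i) (F' i x)) \<in> op_span S"
    by (rule op_spanI) (use T U in \<open>auto simp: F'_def\<close>)
  ultimately show ?thesis by (simp only:)
qed

lemma op_span_cscale:
  assumes "T \<in> op_span S"
  shows "(\<lambda>x. cscale a (T x)) \<in> op_span S"
proof -
  obtain n :: nat and c F where T: "\<forall>i<n. F i \<in> S" "T = (\<lambda>x. \<Sum>i<n. cscale (c i) (F i x))"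
    using assms(1) unfolding op_span_def by blast
  have "(\<lambda>x. cscale a (T x)) = (\<lambda>x. \<Sum>i<n. cscale (a * c i) (F i x))"
    unfolding T(2) by (simp add: cscale_sum_right cscale_cscale)
  moreover have "(\<lambda>x. \<Sum>i<n. cscale (a * c i) (F i x)) \<in> op_span S"
    by (rule op_spanI) (use T in auto)
  ultimately show ?thesis by (simp only:)
qed

lemma op_span_zero: "zero_op \<in> op_span S"
  unfolding op_span_def zero_op_def by (rule CollectI, rule exI[of _ 0]) simp

lemma opnorm_zero_fun: "opnorm (\<lambda>x::'a::chilbert. 0::'a) = 0"
  using opnorm_least[of 0 "\<lambda>x::'a. 0::'a"] opnorm_nonneg[of "\<lambda>x::'a. 0::'a"] bop_zero_op
  by (simp add: zero_op_def)

lemma op_closure_subset: "S \<subseteq> BH \<Longrightarrow> T \<in> S \<Longrightarrow> T \<in> op_closure S"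
  unfolding op_closure_def BH_def
  by (auto intro!: exI[of _ "\<lambda>n. T"] simp: opnorm_zero_fun)

lemma op_closure_bop: "T \<in> op_closure S \<Longrightarrow> bop T"
  unfolding op_closure_def by blast

lemma op_closure_add:
  assumes S: "S \<subseteq> BH" "\<And>T U. T \<in> S \<Longrightarrow> U \<in> S \<Longrightarrow> (\<lambda>x. T x + U x) \<in> S"
    and T: "T \<in> op_closure S" and U: "U \<in> op_closure S"
  shows "(\<lambda>x. T x + U x) \<in> op_closure S"
proof -
  obtain f where f: "\<forall>n. f n \<in> S" "(\<lambda>n. opnorm (\<lambda>x. f n x - T x)) \<longlonglongrightarrow> 0"
    using T unfolding op_closure_def by blast
  obtain g where g: "\<forall>n. g n \<in> S" "(\<lambda>n. opnorm (\<lambda>x. g n x - U x)) \<longlonglongrightarrow> 0"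
    using U unfolding op_closure_def by blast
  have bT: "bop T" and bU: "bop U" using T U op_closure_bop by blast+
  have bf: "bop (f n)" "bop (g n)" for n using f g S by (auto simp: BH_def)
  have bd1: "bop (\<lambda>x. f n x - T x)" and bd2: "bop (\<lambda>x. g n x - U x)" for n
    using bf bT bU by (auto intro: bop_diff_op)
  have le: "opnorm (\<lambda>x. (f n x + g n x) - (T x + U x)) \<le> opnorm (\<lambda>x. f n x - T x) + opnorm (\<lambda>x. g n x - U x)" for n
  proof (rule opnorm_least)
    show "0 \<le> opnorm (\<lambda>x. f n x - T x) + opnorm (\<lambda>x. g n x - U x)"
      using opnorm_nonneg[OF bd1] opnorm_nonneg[OF bd2] by simp
    fix x
    have "norm ((f n x + g n x) - (T x + U x)) \<le> norm (f n x - T x) + norm (g n x - U x)"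
      by (metis add_diff_add norm_triangle_ineq)
    also have "\<dots> \<le> opnorm (\<lambda>x. f n x - T x) * norm x + opnorm (\<lambda>x. g n x - U x) * norm x"
      using opnorm_le[OF bd1, of n x] opnorm_le[OF bd2, of n x] by simp
    finally show "norm ((f n x + g n x) - (T x + U x)) \<le> (opnorm (\<lambda>x. f n x - T x) + opnorm (\<lambda>x. g n x - U x)) * norm x"
      by (simp add: distrib_right)
  qed
  have lim: "(\<lambda>n. opnorm (\<lambda>x. (f n x + g n x) - (T x + U x))) \<longlonglongrightarrow> 0"
  proof (rule tendsto_sandwich[of "\<lambda>n. 0" _ _ "\<lambda>n. opnorm (\<lambda>x. f n x - T x) + opnorm (\<lambda>x. g n x - U x)"])
    show "\<forall>\<^sub>F n in sequentially. 0 \<le> opnorm (\<lambda>x. f n x + g n x - (T x + U x))"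
      by (intro always_eventually allI opnorm_nonneg bop_diff_op bop_add bf bT bU)
    show "\<forall>\<^sub>F n in sequentially. opnorm (\<lambda>x. f n x + g n x - (T x + U x)) \<le> opnorm (\<lambda>x. f n x - T x) + opnorm (\<lambda>x. g n x - U x)"
      using le by simp
    show "(\<lambda>n. opnorm (\<lambda>x. f n x - T x) + opnorm (\<lambda>x. g n x - U x)) \<longlonglongrightarrow> 0"
      using tendsto_add[OF f(2) g(2)] by simp
  qed simp
  have bs: "bop (\<lambda>x. T x + U x)" using bT bU by (rule bop_add)
  have mem: "\<forall>n. (\<lambda>x. f n x + g n x) \<in> S" using f(1) g(1) S(2) by blast
  show ?thesis unfolding op_closure_def mem_Collect_eq
    by (rule conjI[OF bs], rule exI[of _ "\<lambda>n x. f n x + g n x"]) (use mem lim in simp)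
qed

lemma op_closure_comp_left:
  assumes S: "S \<subseteq> BH" "\<And>T. T \<in> S \<Longrightarrow> (\<lambda>x. L (T x)) \<in> S"
    and L: "bop L"
    and T: "T \<in> op_closure S"
  shows "(\<lambda>x. L (T x)) \<in> op_closure S"
proof -
  obtain f where f: "\<forall>n. f n \<in> S" "(\<lambda>n. opnorm (\<lambda>x. f n x - T x)) \<longlonglongrightarrow> 0"
    using T unfolding op_closure_def by blast
  have bT: "bop T" using T op_closure_bop by blast
  obtain B where B: "B\<ge>0" "\<forall>x. norm (L x) \<le> B * norm x" using bop_bound[OF L] by blast
  have bf: "bop (f n)" for n using f S by (auto simp: BH_def)
  have bd1: "bop (\<lambda>x. f n x - T x)" for n
    using bf bT by (auto intro: bop_diff_op)
  have le: "opnorm (\<lambda>x. L (f n x) - L (T x)) \<le> B * opnorm (\<lambda>x. f n x - T x)" for n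
  proof (rule opnorm_least)
    show "0 \<le> B * opnorm (\<lambda>x. f n x - T x)"
      using opnorm_nonneg[OF bd1] B by simp
    fix x
    have "norm (L (f n x) - L (T x)) = norm (L (f n x - T x))" using L by (simp add: bop_diff)
    also have "\<dots> \<le> B * norm (f n x - T x)" using B by blast
    also have "\<dots> \<le> B * (opnorm (\<lambda>x. f n x - T x) * norm x)"
      using opnorm_le[OF bd1, of n x] B by (simp add: mult_left_mono)
    finally show "norm (L (f n x) - L (T x)) \<le> B * opnorm (\<lambda>x. f n x - T x) * norm x"
      by (simp add: mult.assoc)
  qed
  have lim: "(\<lambda>n. opnorm (\<lambda>x. L (f n x) - L (T x))) \<longlonglongrightarrow> 0"
  proof (rule tendsto_sandwich[of "\<lambda>n. 0" _ _ "\<lambda>n. B * opnorm (\<lambda>x. f n x - T x)"])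
    show "\<forall>\<^sub>F n in sequentially. 0 \<le> opnorm (\<lambda>x. L (f n x) - L (T x))"
      using opnorm_nonneg[OF bop_diff_op[OF bop_comp2[OF L bf] bop_comp2[OF L bT]]] by simp
    show "\<forall>\<^sub>F n in sequentially. opnorm (\<lambda>x. L (f n x) - L (T x)) \<le> B * opnorm (\<lambda>x. f n x - T x)"
      using le by simp
    show "(\<lambda>n. B * opnorm (\<lambda>x. f n x - T x)) \<longlonglongrightarrow> 0"
      using tendsto_mult_right_zero[OF f(2), of B] by simp
  qed simp
  have bs: "bop (\<lambda>x. L (T x))" using L bT by (rule bop_comp2)
  have mem: "\<forall>n. (\<lambda>x. L (f n x)) \<in> S" using f(1) S(2) by blast
  show ?thesis unfolding op_closure_def mem_Collect_eq
    by (rule conjI[OF bs], rule exI[of _ "\<lambda>n x. L (f n x)"]) (use mem lim in simp)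
qed

lemma op_span_comp_left:
  assumes "bop L" "\<And>T. T \<in> S \<Longrightarrow> (\<lambda>x. L (T x)) \<in> S" "T \<in> op_span S"
  shows "(\<lambda>x. L (T x)) \<in> op_span S"
proof -
  obtain n :: nat and c F where T: "\<forall>i<n. F i \<in> S" "T = (\<lambda>x. \<Sum>i<n. cscale (c i) (F i x))"
    using assms(3) unfolding op_span_def by blast
  have "(\<lambda>x. L (T x)) = (\<lambda>x. \<Sum>i<n. cscale (c i) ((\<lambda>x. L (F i x)) x))"
    unfolding T(2) using assms(1) by (simp add: bop_sum bopD_cscale)
  moreover have "(\<lambda>x. \<Sum>i<n. cscale (c i) ((\<lambda>x. L (F i x)) x)) \<in> op_span S"
    by (rule op_spanI) (use T(1) assms(2) in auto)
  ultimately show ?thesis by (simp only:)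
qed

lemma op_closure_span_subspace:
  assumes "S \<subseteq> BH"
  shows "op_subspace (op_closure (op_span S))"
proof -
  have sb: "op_span S \<subseteq> BH" using op_span_bop[OF assms] by (auto simp: BH_def)
  have z: "zero_op \<in> op_closure (op_span S)"
    by (rule op_closure_subset[OF sb op_span_zero])
  have a: "(\<lambda>x. T x + U x) \<in> op_closure (op_span S)"
    if "T \<in> op_closure (op_span S)" "U \<in> op_closure (op_span S)" for T U
    by (rule op_closure_add[OF sb op_span_add that])
  have c: "(\<lambda>x. cscale c (T x)) \<in> op_closure (op_span S)"
    if "T \<in> op_closure (op_span S)" for T c
    by (rule op_closure_comp_left[OF sb op_span_cscale bop_cscale[OF bop_id] that])
  show ?thesis unfolding op_subspace_def using z a c by blast
qed


section \<open>Riesz representation\<close>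

lemma parallelogram: "(norm (a + b))\<^sup>2 + (norm (a - b))\<^sup>2 = 2 * (norm a)\<^sup>2 + 2 * (norm (b::'a::chilbert))\<^sup>2"
proof -
  have "(norm (a + (-b)))\<^sup>2 = (norm a)\<^sup>2 + (norm b)\<^sup>2 + 2 * Re (cinner a (-b))"
    using norm_add_sq[of a "-b"] by simp
  then show ?thesis using norm_add_sq[of a b] by (simp add: cinner_minus_right)
qed

lemma riesz:
  fixes f :: "'a::chilbert \<Rightarrow> complex"
  assumes add: "\<And>x y. f (x + y) = f x + f y"
    and sc: "\<And>c x. f (cscale c x) = c * f x"
    and bnd: "\<And>x. cmod (f x) \<le> B * norm x"
  shows "\<exists>z. \<forall>x. f x = cinner z x"
proof (cases "\<forall>x. f x = 0")
  case True then show ?thesis by (intro exI[of _ 0]) simp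
next
  case False
  have bl: "bounded_linear f"
  proof
    fix x y :: 'a and r :: real
    show "f (x + y) = f x + f y" by (rule add)
    show "f (scaleR r x) = scaleR r (f x)" using sc[of "complex_of_real r" x]
      by (simp add: cscale_of_real scaleR_conv_of_real)
    show "\<exists>K. \<forall>x. norm (f x) \<le> norm x * K" using bnd by (metis mult.commute)
  qed
  have f0: "f 0 = 0" using add[of 0 0] by simp
  from False obtain x1 where "f x1 \<noteq> 0" by blast
  define E where "E = {x. f x = 1}"
  have "cscale (1 / f x1) x1 \<in> E" using \<open>f x1 \<noteq> 0\<close> by (simp add: E_def sc)
  then have Ene: "E \<noteq> {}" by blast
  define d where "d = Inf (norm ` E)"
  have bb: "bdd_below (norm ` E)" by (auto intro: bdd_belowI[of _ 0])
  have dle: "d \<le> norm y" if "y \<in> E" for y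
    unfolding d_def using bb that by (auto intro: cInf_lower)
  have d0: "0 \<le> d" unfolding d_def using Ene by (auto intro: cInf_greatest)
  have "\<exists>x\<in>E. norm x < d + 1 / (real n + 1)" for n
  proof -
    have "Inf (norm ` E) < d + 1 / (real n + 1)" unfolding d_def by simp
    then show ?thesis using Ene by (auto simp: cInf_less_iff[OF _ bb])
  qed
  then obtain s where s: "\<And>n. s n \<in> E" "\<And>n. norm (s n) < d + 1 / (real n + 1)" by metis
  have mid: "(norm (s m + s n))\<^sup>2 \<ge> (2 * d)\<^sup>2" for m n
  proof -
    have "scaleR (1/2) (s m + s n) \<in> E"
      using s(1)[of m] s(1)[of n]
      by (simp add: E_def add cscale_of_real[symmetric] sc)
    then have "d \<le> norm (s m + s n) / 2" using dle by fastforce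
    then have "2 * d \<le> norm (s m + s n)" by simp
    then show ?thesis using d0 by (intro power_mono) simp_all
  qed
  have sq: "(norm (s k))\<^sup>2 \<le> d\<^sup>2 + (2 * d + 1) / (real M + 1)" if "k \<ge> M" for k M
  proof -
    have e: "1 / (real k + 1) \<le> 1 / (real M + 1)" using that by (simp add: frac_le)
    have e1: "1 / (real k + 1) \<le> 1" by simp
    have "norm (s k) \<le> d + 1 / (real k + 1)" using s(2)[of k] by simp
    then have "(norm (s k))\<^sup>2 \<le> (d + 1 / (real k + 1))\<^sup>2" by (simp add: power_mono)
    also have "\<dots> = d\<^sup>2 + (2 * d + 1 / (real k + 1)) * (1 / (real k + 1))"
      by (simp add: power2_eq_square algebra_simps)
    also have "\<dots> \<le> d\<^sup>2 + (2 * d + 1) * (1 / (real M + 1))"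
      using e e1 d0 by (intro add_left_mono mult_mono) auto
    finally show ?thesis by simp
  qed
  have "Cauchy s"
  proof (rule metric_CauchyI)
    fix e :: real assume e: "e > 0"
    obtain M :: nat where M: "4 * (2 * d + 1) / e\<^sup>2 < real M + 1"
      using reals_Archimedean2[of "4 * (2 * d + 1) / e\<^sup>2"] by (smt (verit) of_nat_0_le_iff)
    have M': "4 * (2 * d + 1) / (real M + 1) < e\<^sup>2"
      using M e by (simp add: field_simps)
    show "\<exists>M. \<forall>m\<ge>M. \<forall>n\<ge>M. dist (s m) (s n) < e"
    proof (intro exI allI impI)
      fix m n assume mn: "m \<ge> M" "n \<ge> M"
      have m4: "4 * d\<^sup>2 \<le> (norm (s m + s n))\<^sup>2" using mid[of m n] by (simp add: power_mult_distrib)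
      have "(norm (s m - s n))\<^sup>2 \<le> 4 * ((2 * d + 1) / (real M + 1))"
        using parallelogram[of "s m" "s n"] sq[OF mn(1)] sq[OF mn(2)] m4 by linarith
      also have "\<dots> = 4 * (2 * d + 1) / (real M + 1)" by simp
      also have "\<dots> < e\<^sup>2" by (rule M')
      finally have "(norm (s m - s n))\<^sup>2 < e\<^sup>2" .
      then show "dist (s m) (s n) < e" using e by (simp add: dist_norm power_less_imp_less_base)
    qed
  qed
  then obtain x0 where x0: "s \<longlonglongrightarrow> x0" using Cauchy_convergent_iff convergent_def by blast
  have "(\<lambda>n. f (s n)) \<longlonglongrightarrow> f x0" by (rule bounded_linear.tendsto[OF bl x0])
  moreover have "(\<lambda>n. f (s n)) = (\<lambda>n. 1)" using s(1) by (auto simp: E_def)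
  ultimately have fx0: "f x0 = 1" using LIMSEQ_unique by (metis tendsto_const)
  have nx0: "norm x0 \<le> d"
  proof -
    have "(\<lambda>n. norm (s n)) \<longlonglongrightarrow> norm x0" by (rule tendsto_norm[OF x0])
    moreover have "(\<lambda>n. d + 1 / (real n + 1)) \<longlonglongrightarrow> d + 0"
    proof -
      have "(\<lambda>n. inverse (real (Suc n))) \<longlonglongrightarrow> 0" by (rule LIMSEQ_inverse_real_of_nat)
      then have "(\<lambda>n. 1 / (real n + 1)) \<longlonglongrightarrow> 0" by (simp add: inverse_eq_divide add.commute)
      then show ?thesis by (intro tendsto_add tendsto_const)
    qed
    ultimately show ?thesis using s(2) by (intro LIMSEQ_le[where X="\<lambda>n. norm (s n)" and Y = "\<lambda>n. d + 1 / (real n + 1)"]) (auto intro: less_imp_le)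
  qed
  have min: "norm x0 \<le> norm y" if "f y = 1" for y
    using nx0 dle[of y] that by (simp add: E_def)
  have orth: "cinner x0 n0 = 0" if "f n0 = 0" for n0
  proof -
    define w where "w = cinner x0 n0"
    define t :: real where "t = 1 / ((norm n0)\<^sup>2 + 1)"
    have p: "0 < (norm n0)\<^sup>2 + 1" using zero_le_power2[of "norm n0"] by linarith
    have t0: "t > 0" using p by (simp add: t_def)
    have tn: "t * (norm n0)\<^sup>2 < 1" unfolding t_def using p by (simp add: field_simps)
    define l where "l = - complex_of_real t * cnj w"
    have "f (x0 + cscale l n0) = 1" using fx0 that by (simp add: add sc)
    then have "(norm x0)\<^sup>2 \<le> (norm (x0 + cscale l n0))\<^sup>2" using min by (simp add: power_mono)
    also have "\<dots> = (norm x0)\<^sup>2 + (norm (cscale l n0))\<^sup>2 + 2 * Re (l * w)"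
      by (simp add: norm_add_sq cinner_cscale_right w_def)
    also have "Re (l * w) = - t * (cmod w)\<^sup>2"
      using cmod_power2[of w] by (simp add: l_def power2_eq_square algebra_simps)
    also have "(norm (cscale l n0))\<^sup>2 = t\<^sup>2 * (cmod w)\<^sup>2 * (norm n0)\<^sup>2"
      using t0 by (simp add: norm_cscale l_def norm_mult power_mult_distrib)
    finally have "0 \<le> t * (cmod w)\<^sup>2 * (t * (norm n0)\<^sup>2 - 2)"
      by (simp add: power2_eq_square algebra_simps)
    moreover have neg: "t * (norm n0)\<^sup>2 - 2 < 0" using tn by simp
    ultimately have A: "t * (cmod w)\<^sup>2 = 0"
    proof -
      assume h: "0 \<le> t * (cmod w)\<^sup>2 * (t * (norm n0)\<^sup>2 - 2)"
      show ?thesis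
      proof (rule ccontr)
        assume "t * (cmod w)\<^sup>2 \<noteq> 0"
        moreover have "0 \<le> t * (cmod w)\<^sup>2" using t0 by simp
        ultimately have "t * (cmod w)\<^sup>2 > 0" by linarith
        then have "t * (cmod w)\<^sup>2 * (t * (norm n0)\<^sup>2 - 2) < 0" using neg by (rule mult_pos_neg)
        then show False using h by linarith
      qed
    qed
    then have "cmod w = 0" using t0 by simp
    then show ?thesis by (simp add: w_def)
  qed
  have x0nz: "x0 \<noteq> 0" using fx0 f0 by auto
  then have nz: "(norm x0)\<^sup>2 > 0" by simp
  define z where "z = scaleR (1 / (norm x0)\<^sup>2) x0"
  show ?thesis
  proof (intro exI allI)
    fix x
    have "f (x - cscale (f x) x0) = 0"
      using add[of "x - cscale (f x) x0" "cscale (f x) x0"] by (simp add: sc fx0)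
    then have "cinner x0 (x - cscale (f x) x0) = 0" by (rule orth)
    then have "cinner x0 x = f x * cinner x0 x0" by (simp add: cinner_diff_right cinner_cscale_right)
    then have "cinner x0 x = f x * complex_of_real ((norm x0)\<^sup>2)" by (simp add: cinner_self)
    then show "f x = cinner z x" using nz
      by (simp add: z_def cinner_scaleR_left field_simps)
  qed
qed

lemma bop_is_adj:
  fixes T :: "'a::chilbert \<Rightarrow> 'a"
  assumes "bop T" shows "is_adj T (adj T)"
proof -
  obtain B where B: "B\<ge>0" "\<forall>x. norm (T x) \<le> B * norm x" using bop_bound[OF assms] by blast
  have "\<exists>z. \<forall>x. cinner y (T x) = cinner z x" for y
  proof (rule riesz)
    fix x x'
    show "cinner y (T (x + x')) = cinner y (T x) + cinner y (T x')"
      using assms by (simp add: bopD_add cinner_add_right)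
    fix c
    show "cinner y (T (cscale c x)) = c * cinner y (T x)"
      using assms by (simp add: bopD_cscale cinner_cscale_right)
    show "cmod (cinner y (T x)) \<le> (norm y * B) * norm x"
      using Cauchy_Schwarz_c[of y "T x"] B
      by (metis mult.assoc mult_left_mono norm_ge_zero order_trans)
  qed
  then obtain S where S: "\<And>y x. cinner y (T x) = cinner (S y) x" by metis
  have "is_adj T S" unfolding is_adj_def
    by (metis S cinner_commute)
  then show ?thesis by (rule is_adj_adj)
qed


section \<open>Operator systems\<close>

lemma opsysD:
  assumes "cstar_opsys A X"
  shows "A \<subseteq> BH" "X \<subseteq> BH" "A \<subseteq> X" "op_subspace A" "selfadj_set A" "selfadj_set X"
    "closure (hspan {a \<xi> | a \<xi>. a \<in> A}) = UNIV"
    "X = op_closure (op_span {a \<circ> x | a x. a \<in> A \<and> x \<in> X})"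
  using assms unfolding cstar_opsys_def cstar_subalg_def by blast+

lemma opsys_mult: "cstar_opsys A X \<Longrightarrow> a \<in> A \<Longrightarrow> b \<in> A \<Longrightarrow> a \<circ> b \<in> A"
  unfolding cstar_opsys_def cstar_subalg_def by blast

lemma opsys_S_BH:
  assumes "cstar_opsys A X"
  shows "{a \<circ> x | a x. a \<in> A \<and> x \<in> X} \<subseteq> BH"
  using opsysD(1,2)[OF assms] bop_comp by (auto simp: BH_def)

lemma opsys_subspace:
  assumes "cstar_opsys A X" shows "op_subspace X"
proof -
  have h: "op_subspace (op_closure (op_span {a \<circ> x | a x. a \<in> A \<and> x \<in> X}))"
    by (rule op_closure_span_subspace[OF opsys_S_BH[OF assms]])
  show ?thesis by (rule ssubst[OF opsysD(8)[OF assms]], rule h)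
qed

lemma opsys_left_closed:
  assumes X: "cstar_opsys A X" and b: "bop b" and ba: "\<And>a. a \<in> A \<Longrightarrow> b \<circ> a \<in> A"
    and y: "y \<in> X"
  shows "b \<circ> y \<in> X"
proof -
  define S where "S = {a \<circ> x | a x. a \<in> A \<and> x \<in> X}"
  have SB: "S \<subseteq> BH" unfolding S_def by (rule opsys_S_BH[OF X])
  have sb: "op_span S \<subseteq> BH" using op_span_bop[OF SB] by (auto simp: BH_def)
  have XS: "X = op_closure (op_span S)" unfolding S_def by (rule opsysD(8)[OF X])
  have inS: "(\<lambda>x. b (T x)) \<in> S" if T: "T \<in> S" for T
  proof -
    obtain a x where ax: "T = a \<circ> x" "a \<in> A" "x \<in> X" using T unfolding S_def by blast
    have "(\<lambda>z. b (T z)) = (b \<circ> a) \<circ> x" using ax by (simp add: comp_def)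
    then show ?thesis unfolding S_def using ba[OF ax(2)] ax(3) by blast
  qed
  from y have yS: "y \<in> op_closure (op_span S)" by (simp only: XS[symmetric])
  have "(\<lambda>x. b (y x)) \<in> op_closure (op_span S)"
    by (rule op_closure_comp_left[OF sb op_span_comp_left[OF b inS] b yS])
  then show ?thesis using XS by (simp add: comp_def)
qed

lemma subspace_zero: "op_subspace S \<Longrightarrow> zero_op \<in> S"
  unfolding op_subspace_def by blast

lemma subspace_add: "op_subspace S \<Longrightarrow> T \<in> S \<Longrightarrow> U \<in> S \<Longrightarrow> (\<lambda>x. T x + U x) \<in> S"
  unfolding op_subspace_def by blast

lemma subspace_cscale: "op_subspace S \<Longrightarrow> T \<in> S \<Longrightarrow> (\<lambda>x. cscale c (T x)) \<in> S"
  unfolding op_subspace_def by blast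

lemma subspace_sum:
  assumes S: "op_subspace S" and F: "finite F" and f: "\<And>i. i \<in> F \<Longrightarrow> f i \<in> S"
  shows "(\<lambda>x. \<Sum>i\<in>F. f i x) \<in> S"
  using F f
proof (induction F rule: finite_induct)
  case empty
  have "(\<lambda>x. \<Sum>i\<in>{}. f i x) = zero_op" by (simp add: zero_op_def)
  then show ?case using subspace_zero[OF S] by simp
next
  case (insert i F)
  have "(\<lambda>x. f i x + (\<lambda>x. \<Sum>i\<in>F. f i x) x) \<in> S"
    using insert by (intro subspace_add[OF S]) auto
  moreover have "(\<lambda>x. f i x + (\<lambda>x. \<Sum>i\<in>F. f i x) x) = (\<lambda>x. \<Sum>i\<in>insert i F. f i x)"
    using insert.hyps by simp
  ultimately show ?case by simp
qed

lemma additive_zero: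
  fixes f :: "'a::real_normed_vector \<Rightarrow> 'b::real_normed_vector"
  assumes add: "\<And>x y. f (x + y) = f x + f y"
  shows "f 0 = 0"
  using add[of 0 0] by simp

lemma additive_sum:
  fixes f :: "'a::real_normed_vector \<Rightarrow> 'b::real_normed_vector"
  assumes add: "\<And>x y. f (x + y) = f x + f y"
  shows "f (\<Sum>i\<in>F. g i) = (\<Sum>i\<in>F. f (g i))"
  by (induction F rule: infinite_finite_induct) (simp_all add: additive_zero[OF add] add)

lemma hspan_zero:
  fixes f :: "'a::chilbert \<Rightarrow> 'b::real_normed_vector"
  assumes add: "\<And>x y. f (x + y) = f x + f y"
    and G: "\<And>v c. v \<in> G \<Longrightarrow> f (cscale c v) = 0"
    and y: "y \<in> hspan G"
  shows "f y = 0"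
proof -
  obtain n :: nat and c v where y: "\<forall>i<n. v i \<in> G" "y = (\<Sum>i<n. cscale (c i) (v i))"
    using assms(3) unfolding hspan_def by blast
  show ?thesis unfolding y(2) additive_sum[OF add] using y(1) G by simp
qed

lemma dense_zero:
  fixes f :: "'a::chilbert \<Rightarrow> 'b::real_normed_vector"
  assumes D: "closure (hspan G) = UNIV"
    and add: "\<And>x y. f (x + y) = f x + f y"
    and G: "\<And>v c. v \<in> G \<Longrightarrow> f (cscale c v) = 0"
    and cont: "\<And>x. isCont f x"
  shows "f y = 0"
proof -
  have "y \<in> closure (hspan G)" using D by simp
  then obtain s where s: "\<And>n. s n \<in> hspan G" "s \<longlonglongrightarrow> y"
    unfolding closure_sequential by blast
  have "(\<lambda>n. f (s n)) \<longlonglongrightarrow> f y" by (rule isCont_tendsto_compose[OF cont s(2)])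
  moreover have "(\<lambda>n. f (s n)) = (\<lambda>n. 0)" using hspan_zero[OF add G s(1)] by auto
  ultimately show ?thesis using LIMSEQ_unique tendsto_const by metis
qed

lemma ccpD:
  assumes "ccp X \<rho>"
  shows "\<And>x. x \<in> X \<Longrightarrow> bop (\<rho> x)"
    "\<And>x y. x \<in> X \<Longrightarrow> y \<in> X \<Longrightarrow> \<rho> (\<lambda>\<xi>. x \<xi> + y \<xi>) = (\<lambda>\<eta>. \<rho> x \<eta> + \<rho> y \<eta>)"
    "\<And>c x. x \<in> X \<Longrightarrow> \<rho> (\<lambda>\<xi>. cscale c (x \<xi>)) = (\<lambda>\<eta>. cscale c (\<rho> x \<eta>))"
    "\<And>x. x \<in> X \<Longrightarrow> \<rho> (adj x) = adj (\<rho> x)"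
    "\<And>n M. (\<forall>i<n. \<forall>j<n. M i j \<in> X) \<Longrightarrow> matnorm n (\<lambda>i j. \<rho> (M i j)) \<le> matnorm n M"
    "\<And>n M. (\<forall>i<n. \<forall>j<n. M i j \<in> X) \<Longrightarrow> mat_pos n M \<Longrightarrow> mat_pos n (\<lambda>i j. \<rho> (M i j))"
  using assms unfolding ccp_def by blast+

lemma ccp_adj:
  assumes "ccp X \<rho>" "x \<in> X"
  shows "is_adj (\<rho> x) (\<rho> (adj x))"
  using ccpD(4)[OF assms] bop_is_adj[OF ccpD(1)[OF assms]] by simp

lemma rep_right:
  assumes ccp: "ccp X \<rho>" and sa: "selfadj_set X" and x: "x \<in> X" and a: "a \<in> X"
    and z: "adj a \<circ> adj x \<in> X"
    and m: "\<rho> (adj a \<circ> adj x) = \<rho> (adj a) \<circ> \<rho> (adj x)"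
  shows "\<rho> (x \<circ> a) = \<rho> x \<circ> \<rho> a"
proof -
  have ia: "is_adj a (adj a)" and ix: "is_adj x (adj x)" using selfadjD[OF sa] x a by blast+
  have "is_adj (adj a \<circ> adj x) (x \<circ> a)"
    by (rule is_adj_comp[OF is_adj_sym[OF ia] is_adj_sym[OF ix]])
  then have e: "adj (adj a \<circ> adj x) = x \<circ> a" by (rule adj_eq)
  have "\<rho> (x \<circ> a) = adj (\<rho> (adj a \<circ> adj x))" using ccpD(4)[OF ccp z] e by simp
  also have "\<dots> = adj (\<rho> (adj a) \<circ> \<rho> (adj x))" using m by simp
  also have "\<dots> = \<rho> x \<circ> \<rho> a"
  proof (rule adj_eq)
    show "is_adj (\<rho> (adj a) \<circ> \<rho> (adj x)) (\<rho> x \<circ> \<rho> a)"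
      by (rule is_adj_comp[OF is_adj_sym[OF ccp_adj[OF ccp a]] is_adj_sym[OF ccp_adj[OF ccp x]]])
  qed
  finally show ?thesis .
qed

section \<open>Matrices\<close>

lemma vnorm2_nonneg: "0 \<le> vnorm2 n \<xi>"
  unfolding vnorm2_def by (simp add: sum_nonneg)

lemma vnorm2_Re: "vnorm2 n \<xi> = Re (\<Sum>i<n. cinner (\<xi> i) (\<xi> i))"
  unfolding vnorm2_def by (simp add: cinner_self_Re)

lemma Im_self_sum: "Im (\<Sum>i<n. cinner (\<xi> i) (\<xi> i)) = 0"
  by (simp add: cinner_self_Im)

lemma bop_scaleR: "bop T \<Longrightarrow> T (scaleR r x) = scaleR r (T x)"
  using bopD_cscale[of T "complex_of_real r" x] by (simp add: cscale_of_real)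

lemma mat_app_scaleR:
  assumes "\<forall>i<n. \<forall>j<n. bop (M i j)" "i < n"
  shows "mat_app n M (\<lambda>j. scaleR r (\<xi> j)) i = scaleR r (mat_app n M \<xi> i)"
  unfolding mat_app_def using assms by (simp add: bop_scaleR scaleR_sum_right)

lemma norm_le_vnorm2: "j < n \<Longrightarrow> (norm (\<xi> j))\<^sup>2 \<le> vnorm2 n \<xi>"
  unfolding vnorm2_def by (rule member_le_sum) auto

lemma matnorm_props:
  fixes M :: "nat \<Rightarrow> nat \<Rightarrow> ('a::chilbert \<Rightarrow> 'a)"
  assumes bop: "\<forall>i<n. \<forall>j<n. bop (M i j)"
  shows "bdd_above {sqrt (vnorm2 n (mat_app n M \<xi>)) | \<xi>. vnorm2 n \<xi> \<le> 1}"
    and "0 \<le> matnorm n M"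
    and "vnorm2 n (mat_app n M \<xi>) \<le> (matnorm n M)\<^sup>2 * vnorm2 n \<xi>"
proof -
  have "\<forall>i j. \<exists>B\<ge>0. (i < n \<and> j < n \<longrightarrow> (\<forall>x. norm (M i j x) \<le> B * norm x))"
    using bop bop_bound by (metis order_refl)
  then obtain Bf where Bf: "\<And>i j. Bf i j \<ge> 0" "\<And>i j x. i < n \<Longrightarrow> j < n \<Longrightarrow> norm (M i j x) \<le> Bf i j * norm x"
    by metis
  define Bm where "Bm = (\<Sum>i<n. \<Sum>j<n. Bf i j)"
  have Bm: "Bf i j \<le> Bm" if "i < n" "j < n" for i j
  proof -
    have "Bf i j \<le> (\<Sum>j<n. Bf i j)" using that Bf(1) by (intro member_le_sum) auto
    also have "\<dots> \<le> Bm" unfolding Bm_def using that Bf(1) by (intro member_le_sum sum_nonneg) auto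
    finally show ?thesis .
  qed
  have Bm0: "0 \<le> Bm" unfolding Bm_def using Bf(1) by (simp add: sum_nonneg)
  define K where "K = real n * (real n * Bm)\<^sup>2"
  have le1: "vnorm2 n (mat_app n M \<xi>) \<le> K" if "vnorm2 n \<xi> \<le> 1" for \<xi>
  proof -
    have nj: "norm (\<xi> j) \<le> 1" if "j < n" for j
    proof -
      have "(norm (\<xi> j))\<^sup>2 \<le> 1" using norm_le_vnorm2[OF that, of \<xi>] \<open>vnorm2 n \<xi> \<le> 1\<close> by simp
      then show ?thesis by (simp add: power_le_one_iff)
    qed
    have ni: "norm (mat_app n M \<xi> i) \<le> real n * Bm" if "i < n" for i
    proof -
      have "norm (mat_app n M \<xi> i) \<le> (\<Sum>j<n. norm (M i j (\<xi> j)))"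
        unfolding mat_app_def by (rule norm_sum)
      also have "\<dots> \<le> (\<Sum>j<n. Bm)"
      proof (rule sum_mono)
        fix j assume j: "j \<in> {..<n}"
        have "norm (M i j (\<xi> j)) \<le> Bf i j * norm (\<xi> j)" using Bf(2) that j by simp
        also have "\<dots> \<le> Bm * 1" using Bm[OF that] j nj[of j] Bf(1)[of i j] Bm0
          by (intro mult_mono) auto
        finally show "norm (M i j (\<xi> j)) \<le> Bm" by simp
      qed
      finally show ?thesis by simp
    qed
    have "vnorm2 n (mat_app n M \<xi>) \<le> (\<Sum>i<n. (real n * Bm)\<^sup>2)"
      unfolding vnorm2_def using ni by (intro sum_mono power_mono) auto
    then show ?thesis by (simp add: K_def)
  qed
  show bdd: "bdd_above {sqrt (vnorm2 n (mat_app n M \<xi>)) | \<xi>. vnorm2 n \<xi> \<le> 1}"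
    by (rule bdd_aboveI[of _ "sqrt K"]) (auto intro: le1)
  have z: "mat_app n M (\<lambda>i. 0) i = 0" if "i < n" for i
    unfolding mat_app_def using bop that by (intro sum.neutral) (simp add: bop_zero)
  have z2: "vnorm2 n (mat_app n M (\<lambda>i. 0)) = 0"
    unfolding vnorm2_def using z by (intro sum.neutral) simp
  have upper: "sqrt (vnorm2 n (mat_app n M \<xi>)) \<le> matnorm n M" if "vnorm2 n \<xi> \<le> 1" for \<xi>
    unfolding matnorm_def using that by (intro cSup_upper[OF _ bdd]) auto
  show m0: "0 \<le> matnorm n M" using upper[of "\<lambda>i. 0"] z2 by (simp add: vnorm2_def)
  show "vnorm2 n (mat_app n M \<xi>) \<le> (matnorm n M)\<^sup>2 * vnorm2 n \<xi>"
  proof (cases "vnorm2 n \<xi> = 0")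
    case True
    then have "\<forall>j<n. \<xi> j = 0" unfolding vnorm2_def by (simp add: sum_nonneg_eq_0_iff)
    then have zz: "mat_app n M \<xi> i = 0" if "i < n" for i
      unfolding mat_app_def using bop that by (intro sum.neutral) (simp add: bop_zero)
    then have "vnorm2 n (mat_app n M \<xi>) = 0" unfolding vnorm2_def by (intro sum.neutral) simp
    then show ?thesis using True by simp
  next
    case False
    define v where "v = vnorm2 n \<xi>"
    have v0: "v > 0" using False vnorm2_nonneg[of n \<xi>] by (simp add: v_def)
    define s where "s = sqrt v"
    have s0: "s > 0" using v0 by (simp add: s_def)
    have ss: "s\<^sup>2 = v" using v0 by (simp add: s_def)
    define \<xi>' where "\<xi>' = (\<lambda>j. scaleR (1 / s) (\<xi> j))"
    have "vnorm2 n \<xi>' = vnorm2 n \<xi> / s\<^sup>2"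
      unfolding vnorm2_def \<xi>'_def using s0 by (simp add: power_mult_distrib sum_divide_distrib divide_simps)
    then have v1: "vnorm2 n \<xi>' = 1" using ss v0 by (simp add: v_def)
    have "vnorm2 n (mat_app n M \<xi>') = vnorm2 n (mat_app n M \<xi>) / s\<^sup>2"
      unfolding vnorm2_def \<xi>'_def using s0 mat_app_scaleR[OF bop]
      by (simp add: power_mult_distrib sum_divide_distrib divide_simps)
    moreover have "sqrt (vnorm2 n (mat_app n M \<xi>')) \<le> matnorm n M" using upper v1 by simp
    ultimately have "sqrt (vnorm2 n (mat_app n M \<xi>) / s\<^sup>2) \<le> matnorm n M" by simp
    moreover have a0: "0 \<le> vnorm2 n (mat_app n M \<xi>) / s\<^sup>2" using vnorm2_nonneg[of n "mat_app n M \<xi>"] by simp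
    ultimately have "(sqrt (vnorm2 n (mat_app n M \<xi>) / s\<^sup>2))\<^sup>2 \<le> (matnorm n M)\<^sup>2"
      by (intro power_mono) simp_all
    then have "vnorm2 n (mat_app n M \<xi>) / s\<^sup>2 \<le> (matnorm n M)\<^sup>2"
      using a0 by simp
    then have "vnorm2 n (mat_app n M \<xi>) \<le> (matnorm n M)\<^sup>2 * s\<^sup>2" using s0 by (simp add: pos_divide_le_eq)
    then show ?thesis using ss by (simp add: v_def)
  qed
qed


section \<open>Block matrices\<close>

definition blk :: "nat \<Rightarrow> real \<Rightarrow> (nat \<Rightarrow> nat \<Rightarrow> ('a::chilbert \<Rightarrow> 'a)) \<Rightarrow> (nat \<Rightarrow> nat \<Rightarrow> ('a \<Rightarrow> 'a)) \<Rightarrow> nat \<Rightarrow> nat \<Rightarrow> ('a \<Rightarrow> 'a)" where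
  "blk n t M MA i j = (if i < n then (if j < n then (if i = j then (\<lambda>v. v) else (\<lambda>v. 0)) else M i (j - n))
      else (if j < n then MA j (i - n) else (if i = j then (\<lambda>v. cscale (complex_of_real (t\<^sup>2)) v) else (\<lambda>v. 0))))"

lemma blk_app_lo:
  assumes i: "i < n"
  shows "mat_app (2*n) (blk n t M MA) \<zeta> i = \<zeta> i + mat_app n M (\<lambda>j. \<zeta> (n+j)) i"
proof -
  have "mat_app (2*n) (blk n t M MA) \<zeta> i = (\<Sum>j<n. blk n t M MA i j (\<zeta> j)) + (\<Sum>j<n. blk n t M MA i (n+j) (\<zeta> (n+j)))"
    unfolding mat_app_def mult_2 by (rule sum_split_add)
  also have "(\<Sum>j<n. blk n t M MA i j (\<zeta> j)) = (\<Sum>j<n. if i = j then \<zeta> j else 0)"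
    using i by (intro sum.cong) (auto simp: blk_def)
  also have "\<dots> = \<zeta> i" using i by (simp add: sum.delta)
  also have "(\<Sum>j<n. blk n t M MA i (n+j) (\<zeta> (n+j))) = mat_app n M (\<lambda>j. \<zeta> (n+j)) i"
    using i unfolding mat_app_def by (intro sum.cong) (auto simp: blk_def)
  finally show ?thesis .
qed

lemma blk_app_hi:
  assumes i: "i < n"
  shows "mat_app (2*n) (blk n t M MA) \<zeta> (n+i) = (\<Sum>j<n. MA j i (\<zeta> j)) + cscale (complex_of_real (t\<^sup>2)) (\<zeta> (n+i))"
proof -
  have "mat_app (2*n) (blk n t M MA) \<zeta> (n+i) = (\<Sum>j<n. blk n t M MA (n+i) j (\<zeta> j)) + (\<Sum>j<n. blk n t M MA (n+i) (n+j) (\<zeta> (n+j)))"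
    unfolding mat_app_def mult_2 by (rule sum_split_add)
  also have "(\<Sum>j<n. blk n t M MA (n+i) j (\<zeta> j)) = (\<Sum>j<n. MA j i (\<zeta> j))"
    by (intro sum.cong) (auto simp: blk_def)
  also have "(\<Sum>j<n. blk n t M MA (n+i) (n+j) (\<zeta> (n+j))) = (\<Sum>j<n. if i = j then cscale (complex_of_real (t\<^sup>2)) (\<zeta> (n+j)) else 0)"
    by (intro sum.cong) (auto simp: blk_def)
  also have "\<dots> = cscale (complex_of_real (t\<^sup>2)) (\<zeta> (n+i))" using i by (simp add: sum.delta)
  finally show ?thesis .
qed

lemma blk_form:
  "(\<Sum>i<2*n. cinner (\<zeta> i) (mat_app (2*n) (blk n t M MA) \<zeta> i)) =
    (\<Sum>i<n. cinner (\<zeta> i) (\<zeta> i)) + (\<Sum>i<n. cinner (\<zeta> i) (mat_app n M (\<lambda>j. \<zeta> (n+j)) i))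
    + (\<Sum>i<n. cinner (\<zeta> (n+i)) (\<Sum>j<n. MA j i (\<zeta> j)))
    + complex_of_real (t\<^sup>2) * (\<Sum>i<n. cinner (\<zeta> (n+i)) (\<zeta> (n+i)))"
proof -
  have "(\<Sum>i<2*n. cinner (\<zeta> i) (mat_app (2*n) (blk n t M MA) \<zeta> i)) =
     (\<Sum>i<n. cinner (\<zeta> i) (mat_app (2*n) (blk n t M MA) \<zeta> i)) + (\<Sum>i<n. cinner (\<zeta> (n+i)) (mat_app (2*n) (blk n t M MA) \<zeta> (n+i)))"
    unfolding mult_2 by (rule sum_split_add)
  also have "(\<Sum>i<n. cinner (\<zeta> i) (mat_app (2*n) (blk n t M MA) \<zeta> i)) =
      (\<Sum>i<n. cinner (\<zeta> i) (\<zeta> i)) + (\<Sum>i<n. cinner (\<zeta> i) (mat_app n M (\<lambda>j. \<zeta> (n+j)) i))"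
    by (simp add: blk_app_lo cinner_add_right sum.distrib)
  also have "(\<Sum>i<n. cinner (\<zeta> (n+i)) (mat_app (2*n) (blk n t M MA) \<zeta> (n+i))) =
      (\<Sum>i<n. cinner (\<zeta> (n+i)) (\<Sum>j<n. MA j i (\<zeta> j))) + complex_of_real (t\<^sup>2) * (\<Sum>i<n. cinner (\<zeta> (n+i)) (\<zeta> (n+i)))"
    by (simp add: blk_app_hi cinner_add_right sum.distrib cinner_cscale_right sum_distrib_left)
  finally show ?thesis by (simp add: add.assoc)
qed

lemma sum_cinner_CS:
  "cmod (\<Sum>i<n. cinner (u i) (w i :: 'a::chilbert)) \<le> sqrt (vnorm2 n u) * sqrt (vnorm2 n w)"
proof -
  have "cmod (\<Sum>i<n. cinner (u i) (w i)) \<le> (\<Sum>i<n. cmod (cinner (u i) (w i)))" by (rule norm_sum)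
  also have "\<dots> \<le> (\<Sum>i<n. \<bar>norm (u i)\<bar> * \<bar>norm (w i)\<bar>)" by (intro sum_mono) (simp add: Cauchy_Schwarz_c)
  also have "\<dots> \<le> L2_set (\<lambda>i. norm (u i)) {..<n} * L2_set (\<lambda>i. norm (w i)) {..<n}" by (rule L2_set_mult_ineq)
  also have "\<dots> = sqrt (vnorm2 n u) * sqrt (vnorm2 n w)" by (simp add: L2_set_def vnorm2_def)
  finally show ?thesis .
qed

lemma blk_pos:
  fixes M MA :: "nat \<Rightarrow> nat \<Rightarrow> ('a::chilbert \<Rightarrow> 'a)"
  assumes adj: "\<forall>i<n. \<forall>j<n. is_adj (M i j) (MA i j)"
    and bnd: "\<forall>\<zeta>. vnorm2 n (mat_app n M \<zeta>) \<le> t\<^sup>2 * vnorm2 n \<zeta>"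
    and t: "t \<ge> 0"
  shows "mat_pos (2*n) (blk n t M MA)"
  unfolding mat_pos_def
proof (intro allI)
  fix \<zeta> :: "nat \<Rightarrow> 'a"
  define v where "v = (\<lambda>j. \<zeta> (n+j))"
  define w where "w = mat_app n M v"
  define S where "S = (\<Sum>i<n. cinner (\<zeta> i) (w i))"
  define U where "U = (\<Sum>i<n. cinner (\<zeta> i) (\<zeta> i))"
  define V where "V = (\<Sum>i<n. cinner (v i) (v i))"
  have third: "(\<Sum>i<n. cinner (\<zeta> (n+i)) (\<Sum>j<n. MA j i (\<zeta> j))) = cnj S"
  proof -
    have "(\<Sum>i<n. cinner (\<zeta> (n+i)) (\<Sum>j<n. MA j i (\<zeta> j))) = (\<Sum>i<n. \<Sum>j<n. cinner (M j i (v i)) (\<zeta> j))"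
      using adj unfolding is_adj_def v_def by (simp add: cinner_sum_right)
    also have "\<dots> = (\<Sum>j<n. \<Sum>i<n. cinner (M j i (v i)) (\<zeta> j))" by (rule sum.swap)
    also have "\<dots> = (\<Sum>j<n. cinner (w j) (\<zeta> j))" by (simp add: w_def mat_app_def cinner_sum_left)
    also have "\<dots> = cnj S" unfolding S_def by (simp add: cinner_commute[of "w _"])
    finally show ?thesis .
  qed
  have form: "(\<Sum>i<2*n. cinner (\<zeta> i) (mat_app (2*n) (blk n t M MA) \<zeta> i)) = U + S + cnj S + complex_of_real (t\<^sup>2) * V"
    unfolding blk_form third by (simp add: U_def S_def V_def w_def v_def)
  have ImU: "Im U = 0" and ImV: "Im V = 0" unfolding U_def V_def by (rule Im_self_sum)+
  have ReU: "Re U = vnorm2 n \<zeta>" and ReV: "Re V = vnorm2 n v" unfolding U_def V_def by (simp_all add: vnorm2_Re)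
  show "Im (\<Sum>i<2*n. cinner (\<zeta> i) (mat_app (2*n) (blk n t M MA) \<zeta> i)) = 0 \<and>
        0 \<le> Re (\<Sum>i<2*n. cinner (\<zeta> i) (mat_app (2*n) (blk n t M MA) \<zeta> i))"
  proof
    show "Im (\<Sum>i<2*n. cinner (\<zeta> i) (mat_app (2*n) (blk n t M MA) \<zeta> i)) = 0"
      unfolding form using ImU ImV by simp
    define a where "a = sqrt (vnorm2 n \<zeta>)"
    define b where "b = t * sqrt (vnorm2 n v)"
    have a2: "a\<^sup>2 = vnorm2 n \<zeta>" unfolding a_def using vnorm2_nonneg[of n \<zeta>] by simp
    have b2: "b\<^sup>2 = t\<^sup>2 * vnorm2 n v" unfolding b_def using vnorm2_nonneg[of n v] by (simp add: power_mult_distrib)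
    have sw: "sqrt (vnorm2 n w) \<le> b"
    proof -
      have "sqrt (vnorm2 n w) \<le> sqrt (t\<^sup>2 * vnorm2 n v)" unfolding w_def using bnd by simp
      also have "\<dots> = b" unfolding b_def using t by (simp add: real_sqrt_mult)
      finally show ?thesis .
    qed
    have "\<bar>Re S\<bar> \<le> cmod S" by (rule abs_Re_le_cmod)
    also have "\<dots> \<le> a * sqrt (vnorm2 n w)" unfolding S_def a_def by (rule sum_cinner_CS)
    also have "\<dots> \<le> a * b" using sw vnorm2_nonneg[of n \<zeta>] by (intro mult_left_mono) (simp_all add: a_def)
    finally have RS: "\<bar>Re S\<bar> \<le> a * b" .
    have "Re (U + S + cnj S + complex_of_real (t\<^sup>2) * V) = a\<^sup>2 + 2 * Re S + b\<^sup>2"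
      using ReU ReV a2 b2 ImV by simp
    also have "\<dots> \<ge> (a - b)\<^sup>2" using RS by (simp add: power2_diff)
    finally show "0 \<le> Re (\<Sum>i<2*n. cinner (\<zeta> i) (mat_app (2*n) (blk n t M MA) \<zeta> i))"
      unfolding form by (smt (verit) zero_le_power2)
  qed
qed


lemma isCont_bop: "bop F \<Longrightarrow> isCont F x"
  by (rule linear_continuous_at[OF bop_bounded_linear])

lemma isCont_cinner_bop: "bop F \<Longrightarrow> bop G \<Longrightarrow> isCont (\<lambda>u. cinner (F u) (G u)) x"
  by (rule continuous_cinner) (rule isCont_bop, assumption)+

lemma bop_const0: "bop (\<lambda>u. 0)"
  using bop_zero_op by (simp add: zero_op_def)

locale ext_setting =
  fixes A X At Xt :: "('h::chilbert \<Rightarrow> 'h) set"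
    and \<pi> :: "('h \<Rightarrow> 'h) \<Rightarrow> ('k::chilbert \<Rightarrow> 'k)"
  assumes opsys: "cstar_opsys A X"
    and unit: "unitization A X At Xt"
    and rep: "opsys_rep A X \<pi>"
    and nd: "nondegenerate A \<pi>"
begin

lemma opsys_t: "cstar_opsys At Xt" using unit unfolding unitization_def by blast
lemma unital: "unital_alg At" using unit unfolding unitization_def by blast
lemma A_At: "A \<subseteq> At" using unit unfolding unitization_def by blast
lemma X_Xt: "X \<subseteq> Xt" using unit unfolding unitization_def by blast
lemma ideal: "a \<in> A \<Longrightarrow> b \<in> At \<Longrightarrow> a \<circ> b \<in> A \<and> b \<circ> a \<in> A" using unit unfolding unitization_def by blast
lemma AXt: "a \<in> A \<Longrightarrow> x \<in> Xt \<Longrightarrow> a \<circ> x \<in> X" using unit unfolding unitization_def by blast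
lemma A_X: "A \<subseteq> X" using opsysD(3)[OF opsys] .
lemma At_Xt: "At \<subseteq> Xt" using opsysD(3)[OF opsys_t] .
lemma Xt_BH: "Xt \<subseteq> BH" using opsysD(2)[OF opsys_t] .
lemma At_BH: "At \<subseteq> BH" using opsysD(1)[OF opsys_t] .
lemma X_BH: "X \<subseteq> BH" using opsysD(2)[OF opsys] .
lemma A_BH: "A \<subseteq> BH" using opsysD(1)[OF opsys] .
lemma subX: "op_subspace X" by (rule opsys_subspace[OF opsys])
lemma subXt: "op_subspace Xt" by (rule opsys_subspace[OF opsys_t])
lemma subA: "op_subspace A" using opsysD(4)[OF opsys] .
lemma zeroA: "zero_op \<in> A" using subspace_zero[OF subA] .
lemma zeroXt: "zero_op \<in> Xt" using subspace_zero[OF subXt] .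

lemma bopXt: "x \<in> Xt \<Longrightarrow> bop x" using Xt_BH by (auto simp: BH_def)
lemma bopA: "a \<in> A \<Longrightarrow> bop a" using A_BH by (auto simp: BH_def)
lemma bopAt: "a \<in> At \<Longrightarrow> bop a" using At_BH by (auto simp: BH_def)
lemma bopX: "x \<in> X \<Longrightarrow> bop x" using X_BH by (auto simp: BH_def)

lemma adjA: "a \<in> A \<Longrightarrow> is_adj a (adj a) \<and> adj a \<in> A" using selfadjD[OF opsysD(5)[OF opsys]] .
lemma adjX: "x \<in> X \<Longrightarrow> is_adj x (adj x) \<and> adj x \<in> X" using selfadjD[OF opsysD(6)[OF opsys]] .
lemma adjXt: "x \<in> Xt \<Longrightarrow> is_adj x (adj x) \<and> adj x \<in> Xt" using selfadjD[OF opsysD(6)[OF opsys_t]] .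

lemma XtA: assumes x: "x \<in> Xt" and a: "a \<in> A" shows "x \<circ> a \<in> X"
proof -
  have ix: "is_adj x (adj x)" "adj x \<in> Xt" using adjXt[OF x] by auto
  have ia: "is_adj a (adj a)" "adj a \<in> A" using adjA[OF a] by auto
  have z: "adj a \<circ> adj x \<in> X" by (rule AXt[OF ia(2) ix(2)])
  have "is_adj (adj a \<circ> adj x) (x \<circ> a)"
    by (rule is_adj_comp[OF is_adj_sym[OF ia(1)] is_adj_sym[OF ix(1)]])
  then have "adj (adj a \<circ> adj x) = x \<circ> a" by (rule adj_eq)
  moreover have "adj (adj a \<circ> adj x) \<in> X" using adjX[OF z] by blast
  ultimately show ?thesis by simp
qed

lemma AtX: "b \<in> At \<Longrightarrow> y \<in> X \<Longrightarrow> b \<circ> y \<in> X"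
  by (rule opsys_left_closed[OF opsys bopAt]) (auto dest: ideal)

lemma AtXt: "b \<in> At \<Longrightarrow> x \<in> Xt \<Longrightarrow> b \<circ> x \<in> Xt"
  by (rule opsys_left_closed[OF opsys_t bopAt]) (auto intro: opsys_mult[OF opsys_t])

lemma id_At: "(\<lambda>v. v) \<in> At"
proof -
  obtain e where e: "e \<in> At" "\<And>a. a \<in> At \<Longrightarrow> e \<circ> a = a \<and> a \<circ> e = a"
    using unital unfolding unital_alg_def by blast
  have be: "bop e" using bopAt[OF e(1)] .
  have "(\<lambda>\<xi>. e \<xi> - \<xi>) u = 0" for u
  proof (rule dense_zero[OF opsysD(7)[OF opsys], where f="\<lambda>\<xi>. e \<xi> - \<xi>"])
    show "e (x + y) - (x + y) = (e x - x) + (e y - y)" for x y using be by (simp add: bopD_add)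
    show "isCont (\<lambda>\<xi>. e \<xi> - \<xi>) x" for x using bop_diff_op[OF be bop_id] by (rule isCont_bop)
    fix v c assume "v \<in> {a \<xi> | a \<xi>. a \<in> A}"
    then obtain a \<xi> where v: "v = a \<xi>" "a \<in> A" by blast
    have "cscale c v = a (cscale c \<xi>)" using v bopA by (simp add: bopD_cscale)
    moreover have "e (a \<eta>) = a \<eta>" for \<eta> using e(2)[of a] v(2) A_At by (auto simp: fun_eq_iff)
    ultimately show "e (cscale c v) - cscale c v = 0" by simp
  qed
  then have "e = (\<lambda>v. v)" by (auto simp: fun_eq_iff)
  then show ?thesis using e(1) by simp
qed

lemma id_Xt: "(\<lambda>v. v) \<in> Xt" using id_At At_Xt by blast

lemma ccp_pi: "ccp X \<pi>" using rep unfolding opsys_rep_def by blast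
lemma pi_left: "a \<in> A \<Longrightarrow> x \<in> X \<Longrightarrow> \<pi> (a \<circ> x) = \<pi> a \<circ> \<pi> x"
  using rep unfolding opsys_rep_def by blast
lemma pi_bop: "x \<in> X \<Longrightarrow> bop (\<pi> x)" using ccpD(1)[OF ccp_pi] .
lemma pi_bopA: "a \<in> A \<Longrightarrow> bop (\<pi> a)" using pi_bop A_X by blast
lemma pi_add: "x \<in> X \<Longrightarrow> y \<in> X \<Longrightarrow> \<pi> (\<lambda>\<xi>. x \<xi> + y \<xi>) = (\<lambda>\<eta>. \<pi> x \<eta> + \<pi> y \<eta>)"
  using ccpD(2)[OF ccp_pi] .
lemma pi_cscale: "x \<in> X \<Longrightarrow> \<pi> (\<lambda>\<xi>. cscale c (x \<xi>)) = (\<lambda>\<eta>. cscale c (\<pi> x \<eta>))"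
  using ccpD(3)[OF ccp_pi] .
lemma pi_adj: "x \<in> X \<Longrightarrow> is_adj (\<pi> x) (\<pi> (adj x))" by (rule ccp_adj[OF ccp_pi])

lemma zeroX: "zero_op \<in> X" using subspace_zero[OF subX] .

lemma pi_zero: "\<pi> zero_op = (\<lambda>\<eta>. 0)"
proof -
  have eq: "(\<lambda>\<xi>. zero_op \<xi> + zero_op \<xi>) = zero_op" by (simp add: zero_op_def)
  have "\<pi> zero_op = \<pi> (\<lambda>\<xi>. zero_op \<xi> + zero_op \<xi>)" by (simp only: eq)
  also have "\<dots> = (\<lambda>\<eta>. \<pi> zero_op \<eta> + \<pi> zero_op \<eta>)" by (rule pi_add[OF zeroX zeroX])
  finally have h: "\<pi> zero_op = (\<lambda>\<eta>. \<pi> zero_op \<eta> + \<pi> zero_op \<eta>)" .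
  have "\<pi> zero_op \<eta> = 0" for \<eta> using fun_cong[OF h, of \<eta>] by simp
  then show ?thesis by auto
qed

lemma pi_zero_app[simp]: "\<pi> zero_op \<eta> = 0" using pi_zero by simp

lemma pi_sum:
  assumes F: "finite F" and f: "\<And>i. i \<in> F \<Longrightarrow> f i \<in> X"
  shows "\<pi> (\<lambda>\<xi>. \<Sum>i\<in>F. f i \<xi>) = (\<lambda>\<eta>. \<Sum>i\<in>F. \<pi> (f i) \<eta>)"
  using F f
proof (induction F rule: finite_induct)
  case empty
  have "(\<lambda>\<xi>. \<Sum>i\<in>{}. f i \<xi>) = zero_op" by (simp add: zero_op_def)
  then show ?case using pi_zero by simp
next
  case (insert i F)
  have s: "(\<lambda>\<xi>. \<Sum>i\<in>F. f i \<xi>) \<in> X" using insert by (intro subspace_sum[OF subX]) auto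
  have "(\<lambda>\<xi>. \<Sum>i\<in>insert i F. f i \<xi>) = (\<lambda>\<xi>. f i \<xi> + (\<lambda>\<xi>. \<Sum>i\<in>F. f i \<xi>) \<xi>)"
    using insert.hyps by simp
  then have "\<pi> (\<lambda>\<xi>. \<Sum>i\<in>insert i F. f i \<xi>) = (\<lambda>\<eta>. \<pi> (f i) \<eta> + \<pi> (\<lambda>\<xi>. \<Sum>i\<in>F. f i \<xi>) \<eta>)"
    using pi_add[OF _ s, of "f i"] insert.prems by simp
  then show ?case using insert by simp
qed

lemma pi_right: assumes y: "y \<in> X" and a: "a \<in> A" shows "\<pi> (y \<circ> a) = \<pi> y \<circ> \<pi> a"
proof (rule rep_right[OF ccp_pi opsysD(6)[OF opsys] y])
  show "a \<in> X" using a A_X by blast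
  have "adj a \<in> A" "adj y \<in> X" using adjA[OF a] adjX[OF y] by auto
  then show z: "adj a \<circ> adj y \<in> X" using AXt X_Xt by blast
  show "\<pi> (adj a \<circ> adj y) = \<pi> (adj a) \<circ> \<pi> (adj y)" using pi_left \<open>adj a \<in> A\<close> \<open>adj y \<in> X\<close> by blast
qed

lemma pi_adj_inner: "x \<in> X \<Longrightarrow> cinner (\<pi> x u) v = cinner u (\<pi> (adj x) v)"
  using pi_adj unfolding is_adj_def by blast

lemma pi_adj_inner': "x \<in> X \<Longrightarrow> cinner u (\<pi> x v) = cinner (\<pi> (adj x) u) v"
proof -
  assume x: "x \<in> X"
  have "is_adj (\<pi> (adj x)) (\<pi> x)" by (rule is_adj_sym[OF pi_adj[OF x]])
  then show ?thesis unfolding is_adj_def by simp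
qed

subsection \<open>Density in K\<close>

definition Rv :: "nat \<Rightarrow> (nat \<Rightarrow> ('h \<Rightarrow> 'h)) \<Rightarrow> (nat \<Rightarrow> 'k) \<Rightarrow> 'k" where
  "Rv N g \<eta> = (\<Sum>k<N. \<pi> (g k) (\<eta> k))"

definition Sv :: "('h \<Rightarrow> 'h) \<Rightarrow> nat \<Rightarrow> (nat \<Rightarrow> ('h \<Rightarrow> 'h)) \<Rightarrow> (nat \<Rightarrow> 'k) \<Rightarrow> 'k" where
  "Sv x N g \<eta> = (\<Sum>k<N. \<pi> (x \<circ> g k) (\<eta> k))"

definition GK :: "'k set" where "GK = {\<pi> a \<eta> | a \<eta>. a \<in> A}"

lemma GK_dense: "closure (hspan GK) = UNIV"
  using nd unfolding nondegenerate_def GK_def .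

lemma hspan_rep:
  assumes "y \<in> hspan GK"
  shows "\<exists>N g \<eta>. (\<forall>k<N. g k \<in> A) \<and> y = Rv N g \<eta>"
proof -
  obtain n :: nat and c v where y: "\<forall>i<n. v i \<in> GK" "y = (\<Sum>i<n. cscale (c i) (v i))"
    using assms unfolding hspan_def by blast
  have "\<forall>i. \<exists>p. i < n \<longrightarrow> fst p \<in> A \<and> v i = \<pi> (fst p) (snd p)"
    using y(1) unfolding GK_def by fastforce
  then obtain P where P: "\<And>i. i < n \<Longrightarrow> fst (P i) \<in> A \<and> v i = \<pi> (fst (P i)) (snd (P i))"
    by (metis choice)
  have "y = Rv n (\<lambda>i. fst (P i)) (\<lambda>i. cscale (c i) (snd (P i)))"
    unfolding y(2) Rv_def using P pi_bopA by (intro sum.cong) (auto simp: bopD_cscale)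
  moreover have "\<forall>k<n. fst (P k) \<in> A" using P by blast
  ultimately show ?thesis
    by (rule_tac exI[where x=n], rule_tac exI[where x="\<lambda>i. fst (P i)"], rule_tac exI[where x="\<lambda>i. cscale (c i) (snd (P i))"]) simp
qed

lemma density:
  "\<exists>N g \<eta>. (\<forall>j k. k < N j \<longrightarrow> g j k \<in> A) \<and> (\<lambda>j. Rv (N j) (g j) (\<eta> j)) \<longlonglongrightarrow> u"
proof -
  have "u \<in> closure (hspan GK)" using GK_dense by simp
  then obtain s where s: "\<And>j. s j \<in> hspan GK" "s \<longlonglongrightarrow> u"
    unfolding closure_sequential by blast
  have "\<forall>j. \<exists>p. (\<forall>k<fst p. fst (snd p) k \<in> A) \<and> s j = Rv (fst p) (fst (snd p)) (snd (snd p))"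
    using hspan_rep[OF s(1)] by fastforce
  then obtain P where P: "\<And>j. (\<forall>k<fst (P j). fst (snd (P j)) k \<in> A) \<and> s j = Rv (fst (P j)) (fst (snd (P j))) (snd (snd (P j)))"
    by (metis choice)
  have "(\<lambda>j. Rv (fst (P j)) (fst (snd (P j))) (snd (snd (P j)))) = s" using P by auto
  then have "(\<lambda>j. Rv ((\<lambda>j. fst (P j)) j) ((\<lambda>j. fst (snd (P j))) j) ((\<lambda>j. snd (snd (P j))) j)) \<longlonglongrightarrow> u"
    using s(2) by simp
  moreover have "\<forall>j k. k < (\<lambda>j. fst (P j)) j \<longrightarrow> (\<lambda>j. fst (snd (P j))) j k \<in> A" using P by simp
  ultimately show ?thesis
    by (rule_tac exI[where x="\<lambda>j. fst (P j)"], rule_tac exI[where x="\<lambda>j. fst (snd (P j))"], rule_tac exI[where x="\<lambda>j. snd (snd (P j))"]) simp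
qed

lemma dense_zero_K:
  fixes f :: "'k \<Rightarrow> 'b::real_normed_vector"
  assumes add: "\<And>x y. f (x + y) = f x + f y"
    and cont: "\<And>x. isCont f x"
    and z: "\<And>a \<eta>. a \<in> A \<Longrightarrow> f (\<pi> a \<eta>) = 0"
  shows "f u = 0"
proof (rule dense_zero[OF GK_dense add _ cont])
  fix v c assume "v \<in> GK"
  then obtain a \<eta> where v: "v = \<pi> a \<eta>" "a \<in> A" unfolding GK_def by blast
  have "cscale c v = \<pi> a (cscale c \<eta>)" using v pi_bopA by (simp add: bopD_cscale)
  then show "f (cscale c v) = 0" using z v(2) by simp
qed

lemma eq_on_dense:
  assumes F: "bop F" and G: "bop G" and e: "\<And>a \<eta>. a \<in> A \<Longrightarrow> F (\<pi> a \<eta>) = G (\<pi> a \<eta>)"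
  shows "F = G"
proof
  fix u
  have "(\<lambda>u. F u - G u) u = 0"
  proof (rule dense_zero_K[where f="\<lambda>u. F u - G u"])
    show "F (x + y) - G (x + y) = (F x - G x) + (F y - G y)" for x y using F G by (simp add: bopD_add)
    show "isCont (\<lambda>u. F u - G u) x" for x by (rule isCont_bop[OF bop_diff_op[OF F G]])
    show "F (\<pi> a \<eta>) - G (\<pi> a \<eta>) = 0" if "a \<in> A" for a \<eta> using e[OF that] by simp
  qed
  then show "F u = G u" by simp
qed

end


lemma sum4_swap:
  "(\<Sum>i\<in>I. \<Sum>j\<in>J. \<Sum>k\<in>K. \<Sum>l\<in>L. F i j k l) = (\<Sum>k\<in>K. \<Sum>l\<in>L. \<Sum>i\<in>I. \<Sum>j\<in>J. F i j k l)"
proof -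
  have "(\<Sum>i\<in>I. \<Sum>j\<in>J. \<Sum>k\<in>K. \<Sum>l\<in>L. F i j k l) = (\<Sum>i\<in>I. \<Sum>k\<in>K. \<Sum>j\<in>J. \<Sum>l\<in>L. F i j k l)"
    by (rule sum.cong[OF refl], rule sum.swap)
  also have "\<dots> = (\<Sum>k\<in>K. \<Sum>i\<in>I. \<Sum>j\<in>J. \<Sum>l\<in>L. F i j k l)" by (rule sum.swap)
  also have "\<dots> = (\<Sum>k\<in>K. \<Sum>i\<in>I. \<Sum>l\<in>L. \<Sum>j\<in>J. F i j k l)"
    by (rule sum.cong[OF refl], rule sum.cong[OF refl], rule sum.swap)
  also have "\<dots> = (\<Sum>k\<in>K. \<Sum>l\<in>L. \<Sum>i\<in>I. \<Sum>j\<in>J. F i j k l)"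
    by (rule sum.cong[OF refl], rule sum.swap)
  finally show ?thesis .
qed

context ext_setting
begin

lemma GP:
  assumes M: "\<forall>i<n. \<forall>j<n. M i j \<in> Xt" and pos: "mat_pos n M" and g: "\<forall>i<n. \<forall>k<(N::nat). g i k \<in> A"
  shows "Im (\<Sum>i<n. \<Sum>j<n. cinner (\<Sum>k<N. \<pi> (g i k) (\<eta> k)) (\<Sum>l<N. \<pi> (M i j \<circ> g j l) (\<eta> l))) = 0 \<and>
         0 \<le> Re (\<Sum>i<n. \<Sum>j<n. cinner (\<Sum>k<N. \<pi> (g i k) (\<eta> k)) (\<Sum>l<N. \<pi> (M i j \<circ> g j l) (\<eta> l)))"
proof -
  define B where "B k l = (\<lambda>v. \<Sum>i<n. \<Sum>j<n. adj (g i k) (M i j (g j l v)))" for k l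
  have Mg: "M i j \<circ> g j l \<in> X" if "i<n" "j<n" "l<N" for i j l
    using XtA M g that by blast
  have trm: "adj (g i k) \<circ> (M i j \<circ> g j l) \<in> X" if "i<n" "j<n" "k<N" "l<N" for i j k l
    using AXt[OF conjunct2[OF adjA] ] Mg X_Xt g that by blast
  have inner: "(\<lambda>v. \<Sum>j<n. (adj (g i k) \<circ> (M i j \<circ> g j l)) v) \<in> X" if "i<n" "k<N" "l<N" for i k l
    using that trm by (intro subspace_sum[OF subX]) (auto simp: comp_def)
  have Beq: "B k l = (\<lambda>v. \<Sum>i<n. (\<lambda>v. \<Sum>j<n. (adj (g i k) \<circ> (M i j \<circ> g j l)) v) v)" for k l
    unfolding B_def by simp
  have BX: "B k l \<in> X" if "k<N" "l<N" for k l
    unfolding Beq by (rule subspace_sum[OF subX]) (use that inner in auto)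
  have pis: "\<pi> (\<lambda>v. \<Sum>j<n. (adj (g i k) \<circ> (M i j \<circ> g j l)) v) = (\<lambda>w. \<Sum>j<n. \<pi> (adj (g i k) \<circ> (M i j \<circ> g j l)) w)"
    if "i<n" "k<N" "l<N" for i k l
    by (rule pi_sum) (use that trm in \<open>auto simp: comp_def\<close>)
  have piB: "\<pi> (B k l) = (\<lambda>w. \<Sum>i<n. \<Sum>j<n. \<pi> (adj (g i k)) (\<pi> (M i j \<circ> g j l) w))" if "k<N" "l<N" for k l
  proof -
    have "\<pi> (B k l) = (\<lambda>w. \<Sum>i<n. \<pi> (\<lambda>v. \<Sum>j<n. (adj (g i k) \<circ> (M i j \<circ> g j l)) v) w)"
      unfolding Beq using that inner by (intro pi_sum) auto
    also have "\<dots> = (\<lambda>w. \<Sum>i<n. \<Sum>j<n. \<pi> (adj (g i k) \<circ> (M i j \<circ> g j l)) w)"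
      using that by (intro ext sum.cong refl) (simp only: lessThan_iff pis)
    also have "\<dots> = (\<lambda>w. \<Sum>i<n. \<Sum>j<n. \<pi> (adj (g i k)) (\<pi> (M i j \<circ> g j l) w))"
      using that Mg g adjA by (intro ext sum.cong refl) (simp add: pi_left)
    finally show ?thesis .
  qed
  have posB: "mat_pos N B"
    unfolding mat_pos_def
  proof (intro allI)
    fix \<zeta> :: "nat \<Rightarrow> 'h"
    define u where "u i = (\<Sum>k<N. g i k (\<zeta> k))" for i
    have "(\<Sum>k<N. cinner (\<zeta> k) (mat_app N B \<zeta> k)) = (\<Sum>k<N. \<Sum>l<N. \<Sum>i<n. \<Sum>j<n. cinner (\<zeta> k) (adj (g i k) (M i j (g j l (\<zeta> l)))))"
      unfolding mat_app_def B_def by (simp add: cinner_sum_right)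
    also have "\<dots> = (\<Sum>k<N. \<Sum>l<N. \<Sum>i<n. \<Sum>j<n. cinner (g i k (\<zeta> k)) (M i j (g j l (\<zeta> l))))"
      using g adjA unfolding is_adj_def by (intro sum.cong refl) simp
    also have "\<dots> = (\<Sum>i<n. \<Sum>j<n. \<Sum>k<N. \<Sum>l<N. cinner (g i k (\<zeta> k)) (M i j (g j l (\<zeta> l))))"
      by (rule sum4_swap[symmetric])
    also have "\<dots> = (\<Sum>i<n. \<Sum>j<n. cinner (u i) (M i j (u j)))"
      unfolding u_def using M bopXt by (intro sum.cong refl) (simp add: cinner_sum_left bop_sum, simp add: cinner_sum_right)
    also have "\<dots> = (\<Sum>i<n. cinner (u i) (mat_app n M u i))"
      unfolding mat_app_def by (simp add: cinner_sum_right)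
    finally have eq: "(\<Sum>k<N. cinner (\<zeta> k) (mat_app N B \<zeta> k)) = (\<Sum>i<n. cinner (u i) (mat_app n M u i))" .
    show "Im (\<Sum>k<N. cinner (\<zeta> k) (mat_app N B \<zeta> k)) = 0 \<and> 0 \<le> Re (\<Sum>k<N. cinner (\<zeta> k) (mat_app N B \<zeta> k))"
      unfolding eq using pos unfolding mat_pos_def by blast
  qed
  have gX: "i < n \<Longrightarrow> k < N \<Longrightarrow> g i k \<in> X" for i k using g A_X by blast
  have posPB: "mat_pos N (\<lambda>k l. \<pi> (B k l))"
    by (rule ccpD(6)[OF ccp_pi _ posB]) (use BX in blast)
  have "(\<Sum>k<N. cinner (\<eta> k) (mat_app N (\<lambda>k l. \<pi> (B k l)) \<eta> k)) =
        (\<Sum>k<N. \<Sum>l<N. \<Sum>i<n. \<Sum>j<n. cinner (\<eta> k) (\<pi> (adj (g i k)) (\<pi> (M i j \<circ> g j l) (\<eta> l))))"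
    unfolding mat_app_def by (intro sum.cong refl) (simp add: piB cinner_sum_right)
  also have "\<dots> = (\<Sum>k<N. \<Sum>l<N. \<Sum>i<n. \<Sum>j<n. cinner (\<pi> (g i k) (\<eta> k)) (\<pi> (M i j \<circ> g j l) (\<eta> l)))"
    using gX by (intro sum.cong refl) (simp add: pi_adj_inner)
  also have "\<dots> = (\<Sum>i<n. \<Sum>j<n. \<Sum>k<N. \<Sum>l<N. cinner (\<pi> (g i k) (\<eta> k)) (\<pi> (M i j \<circ> g j l) (\<eta> l)))"
    by (rule sum4_swap[symmetric])
  also have "\<dots> = (\<Sum>i<n. \<Sum>j<n. cinner (\<Sum>k<N. \<pi> (g i k) (\<eta> k)) (\<Sum>l<N. \<pi> (M i j \<circ> g j l) (\<eta> l)))"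
    by (simp only: cinner_sum_left, simp only: cinner_sum_right)
  finally have eq: "(\<Sum>k<N. cinner (\<eta> k) (mat_app N (\<lambda>k l. \<pi> (B k l)) \<eta> k)) =
      (\<Sum>i<n. \<Sum>j<n. cinner (\<Sum>k<N. \<pi> (g i k) (\<eta> k)) (\<Sum>l<N. \<pi> (M i j \<circ> g j l) (\<eta> l)))" .
  show ?thesis using posPB unfolding mat_pos_def eq[symmetric] by blast
qed

lemma pad:
  assumes "\<forall>i<(n::nat). \<forall>k<Nf i. G i k \<in> A"
  shows "\<exists>N g \<eta>. (\<forall>i<n. \<forall>k<N. g i k \<in> A) \<and> (\<forall>i<n. Rv N (g i) \<eta> = Rv (Nf i) (G i) (E i))"
  using assms
proof (induction n)
  case 0 show ?case by blast
next
  case (Suc n)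
  then obtain N g \<eta> where IH: "\<forall>i<n. \<forall>k<N. g i k \<in> A" "\<forall>i<n. Rv N (g i) \<eta> = Rv (Nf i) (G i) (E i)"
    by (metis less_SucI)
  define g' where "g' i k = (if i < n then (if k < N then g i k else zero_op) else (if k < N then zero_op else G n (k - N)))" for i k
  define \<eta>' where "\<eta>' k = (if k < N then \<eta> k else E n (k - N))" for k
  have A': "\<forall>i<Suc n. \<forall>k<N + Nf n. g' i k \<in> A"
    using IH(1) Suc.prems zeroA by (auto simp: g'_def)
  have R': "\<forall>i<Suc n. Rv (N + Nf n) (g' i) \<eta>' = Rv (Nf i) (G i) (E i)"
  proof (intro allI impI)
    fix i assume i: "i < Suc n"
    have split: "Rv (N + Nf n) (g' i) \<eta>' = (\<Sum>k<N. \<pi> (g' i k) (\<eta>' k)) + (\<Sum>k<Nf n. \<pi> (g' i (N+k)) (\<eta>' (N+k)))"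
      unfolding Rv_def by (rule sum_split_add)
    show "Rv (N + Nf n) (g' i) \<eta>' = Rv (Nf i) (G i) (E i)"
    proof (cases "i < n")
      case True
      have "(\<Sum>k<N. \<pi> (g' i k) (\<eta>' k)) = Rv N (g i) \<eta>" unfolding Rv_def using True by (intro sum.cong) (auto simp: g'_def \<eta>'_def)
      moreover have "(\<Sum>k<Nf n. \<pi> (g' i (N+k)) (\<eta>' (N+k))) = 0" using True by (simp add: g'_def)
      ultimately show ?thesis using split IH(2) True by simp
    next
      case False
      then have i': "i = n" using i by simp
      have "(\<Sum>k<N. \<pi> (g' i k) (\<eta>' k)) = 0" using i' by (simp add: g'_def)
      moreover have "(\<Sum>k<Nf n. \<pi> (g' i (N+k)) (\<eta>' (N+k))) = Rv (Nf n) (G n) (E n)"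
        unfolding Rv_def using i' by (simp add: g'_def \<eta>'_def)
      ultimately show ?thesis using split i' by simp
    qed
  qed
  show ?case using A' R'
    by (rule_tac exI[where x="N + Nf n"], rule_tac exI[where x="g'"], rule_tac exI[where x="\<eta>'"]) simp
qed

end


lemma lt2: "i < (2::nat) \<Longrightarrow> i = 0 \<or> i = 1" by auto

context ext_setting
begin

lemma sum2: "(\<Sum>i<(2::nat). f i) = f 0 + f 1" by (simp add: numeral_2_eq_2)

lemma pi_minus: "x \<in> X \<Longrightarrow> \<pi> x (- v) = - \<pi> x v" using pi_bop bop_minus by blast

lemma comp_zero: "bop x \<Longrightarrow> x \<circ> zero_op = zero_op"
  by (auto simp: fun_eq_iff zero_op_def bop_zero)

lemma adj_comp_eq: "x \<in> Xt \<Longrightarrow> a \<in> A \<Longrightarrow> adj (x \<circ> a) = adj a \<circ> adj x"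
  using adj_eq[OF is_adj_comp[OF conjunct1[OF adjXt] conjunct1[OF adjA]]] by blast

lemma KB_form:
  assumes x: "x \<in> Xt" and t: "t \<ge> 0" and bx: "\<And>v. norm (x v) \<le> t * norm v"
    and g: "\<forall>k<N. g k \<in> A" and c: "\<forall>k<P. c k \<in> A"
  shows "0 \<le> (norm (Rv P c \<theta>))\<^sup>2 - 2 * Re (cinner (Rv P c \<theta>) (Sv x N g \<eta>)) + t\<^sup>2 * (norm (Rv N g \<eta>))\<^sup>2"
proof -
  define \<omega> where "\<omega> = Rv P c \<theta>"
  define \<xi> where "\<xi> = Rv N g \<eta>"
  define w where "w = Sv x N g \<eta>"
  define w' where "w' = (\<Sum>l<P. \<pi> (adj x \<circ> c l) (\<theta> l))"
  define M1 :: "nat \<Rightarrow> nat \<Rightarrow> ('h \<Rightarrow> 'h)" where "M1 = (\<lambda>i j. x)"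
  define MA1 :: "nat \<Rightarrow> nat \<Rightarrow> ('h \<Rightarrow> 'h)" where "MA1 = (\<lambda>i j. adj x)"
  define Mb where "Mb = blk 1 t M1 MA1"
  have ix: "is_adj x (adj x)" "adj x \<in> Xt" using adjXt[OF x] by auto
  have bx': "bop x" using bopXt[OF x] .
  have bax: "bop (adj x)" using bopXt[OF ix(2)] .
  have posMb: "mat_pos (2*1) Mb" unfolding Mb_def
  proof (rule blk_pos)
    show "\<forall>i<1. \<forall>j<1. is_adj (M1 i j) (MA1 i j)" using ix by (simp add: M1_def MA1_def)
    show "0 \<le> t" by (rule t)
    show "\<forall>\<zeta>. vnorm2 1 (mat_app 1 M1 \<zeta>) \<le> t\<^sup>2 * vnorm2 1 \<zeta>"
    proof
      fix \<zeta> :: "nat \<Rightarrow> 'h"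
      have "(norm (x (\<zeta> 0)))\<^sup>2 \<le> (t * norm (\<zeta> 0))\<^sup>2" using bx[of "\<zeta> 0"] by (intro power_mono) simp_all
      then show "vnorm2 1 (mat_app 1 M1 \<zeta>) \<le> t\<^sup>2 * vnorm2 1 \<zeta>"
        by (simp add: vnorm2_def mat_app_def M1_def power_mult_distrib)
    qed
  qed
  have cscXt: "(\<lambda>v. cscale (complex_of_real (t\<^sup>2)) v) \<in> Xt" using subspace_cscale[OF subXt id_Xt] by simp
  have zXt: "(\<lambda>v::'h. 0) \<in> Xt" using zeroXt by (simp add: zero_op_def)
  have Mb00: "Mb 0 0 = (\<lambda>v. v)" and Mb01: "Mb 0 1 = x" and Mb10: "Mb 1 0 = adj x"
    and Mb11: "Mb 1 1 = (\<lambda>v. cscale (complex_of_real (t\<^sup>2)) v)"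
    by (simp_all add: Mb_def blk_def M1_def MA1_def)
  have MbXt: "\<forall>i<2*1. \<forall>j<2*1. Mb i j \<in> Xt"
  proof (intro allI impI)
    fix i j :: nat assume "i < 2*1" "j < 2*1"
    then have "i = 0 \<or> i = 1" "j = 0 \<or> j = 1" by auto
    then show "Mb i j \<in> Xt" using Mb00 Mb01 Mb10 Mb11 id_Xt x ix(2) cscXt by auto
  qed
  define gg where "gg i k = (if i = (0::nat) then (if k < P then c k else zero_op) else (if k < P then zero_op else g (k - P)))" for i k
  define \<eta>\<eta> where "\<eta>\<eta> k = (if k < P then \<theta> k else - \<eta> (k - P))" for k
  have ggA: "\<forall>i<2*1. \<forall>k<P+N. gg i k \<in> A" using c g zeroA by (auto simp: gg_def)
  have ggX: "gg i k \<in> X" if "k < P + N" for i k using c g A_X zeroX that by (auto simp: gg_def)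
  note G = GP[OF MbXt posMb ggA, of \<eta>\<eta>]
  have V0: "(\<Sum>k<P+N. \<pi> (gg 0 k) (\<eta>\<eta> k)) = \<omega>"
    unfolding sum_split_add \<omega>_def Rv_def by (simp add: gg_def \<eta>\<eta>_def)
  have V1: "(\<Sum>k<P+N. \<pi> (gg 1 k) (\<eta>\<eta> k)) = - \<xi>"
  proof -
    have "(\<Sum>k<N. \<pi> (gg 1 (P+k)) (\<eta>\<eta> (P+k))) = (\<Sum>k<N. - \<pi> (g k) (\<eta> k))"
      using g A_X by (intro sum.cong refl) (auto simp: gg_def \<eta>\<eta>_def pi_minus)
    then show ?thesis unfolding sum_split_add \<xi>_def Rv_def by (simp add: gg_def sum_negf)
  qed
  have W00: "(\<Sum>l<P+N. \<pi> (Mb 0 0 \<circ> gg 0 l) (\<eta>\<eta> l)) = \<omega>"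
    using V0 unfolding Mb00 by (simp add: comp_def)
  have W01: "(\<Sum>l<P+N. \<pi> (Mb 0 1 \<circ> gg 1 l) (\<eta>\<eta> l)) = - w"
  proof -
    have "(\<Sum>l<P. \<pi> (Mb 0 1 \<circ> gg 1 l) (\<eta>\<eta> l)) = 0"
      unfolding Mb01 by (simp add: gg_def comp_zero[OF bx'])
    moreover have "(\<Sum>l<N. \<pi> (Mb 0 1 \<circ> gg 1 (P+l)) (\<eta>\<eta> (P+l))) = (\<Sum>l<N. - \<pi> (x \<circ> g l) (\<eta> l))"
      unfolding Mb01 using g XtA[OF x] by (intro sum.cong refl) (auto simp: gg_def \<eta>\<eta>_def pi_minus)
    ultimately show ?thesis unfolding sum_split_add w_def Sv_def by (simp add: sum_negf)
  qed
  have W10: "(\<Sum>l<P+N. \<pi> (Mb 1 0 \<circ> gg 0 l) (\<eta>\<eta> l)) = w'"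
  proof -
    have "(\<Sum>l<N. \<pi> (Mb 1 0 \<circ> gg 0 (P+l)) (\<eta>\<eta> (P+l))) = 0"
      unfolding Mb10 by (simp add: gg_def comp_zero[OF bax])
    moreover have "(\<Sum>l<P. \<pi> (Mb 1 0 \<circ> gg 0 l) (\<eta>\<eta> l)) = w'"
      unfolding w'_def Mb10 by (intro sum.cong refl) (auto simp: gg_def \<eta>\<eta>_def)
    ultimately show ?thesis unfolding sum_split_add by simp
  qed
  have W11: "(\<Sum>l<P+N. \<pi> (Mb 1 1 \<circ> gg 1 l) (\<eta>\<eta> l)) = cscale (complex_of_real (t\<^sup>2)) (- \<xi>)"
  proof -
    have "(\<Sum>l<P+N. \<pi> (Mb 1 1 \<circ> gg 1 l) (\<eta>\<eta> l)) = (\<Sum>l<P+N. cscale (complex_of_real (t\<^sup>2)) (\<pi> (gg 1 l) (\<eta>\<eta> l)))"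
    proof (intro sum.cong refl)
      fix l assume "l \<in> {..<P+N}"
      then have "gg 1 l \<in> X" using ggX by simp
      then show "\<pi> (Mb 1 1 \<circ> gg 1 l) (\<eta>\<eta> l) = cscale (complex_of_real (t\<^sup>2)) (\<pi> (gg 1 l) (\<eta>\<eta> l))"
        using pi_cscale[of "gg 1 l" "complex_of_real (t\<^sup>2)"] unfolding Mb11 by (simp add: comp_def)
    qed
    also have "\<dots> = cscale (complex_of_real (t\<^sup>2)) (- \<xi>)" using V1 by (simp add: cscale_sum_right[symmetric])
    finally show ?thesis .
  qed
  have Qeq: "(\<Sum>i<2*1. \<Sum>j<2*1. cinner (\<Sum>k<P+N. \<pi> (gg i k) (\<eta>\<eta> k)) (\<Sum>l<P+N. \<pi> (Mb i j \<circ> gg j l) (\<eta>\<eta> l)))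
     = cinner \<omega> \<omega> + cinner \<omega> (- w) + (cinner (- \<xi>) w' + cinner (- \<xi>) (cscale (complex_of_real (t\<^sup>2)) (- \<xi>)))"
    by (simp only: mult_1_right sum2 V0 V1 W00 W01 W10 W11)
  have cross: "cinner \<xi> w' = cinner w \<omega>"
  proof -
    have "cinner \<xi> w' = (\<Sum>k<N. \<Sum>l<P. cinner (\<pi> (g k) (\<eta> k)) (\<pi> (adj x \<circ> c l) (\<theta> l)))"
      unfolding \<xi>_def w'_def Rv_def by (simp only: cinner_sum_left, simp only: cinner_sum_right)
    also have "\<dots> = (\<Sum>k<N. \<Sum>l<P. cinner (\<eta> k) (\<pi> (adj (g k) \<circ> adj x \<circ> c l) (\<theta> l)))"
    proof (intro sum.cong refl)
      fix k l assume k: "k \<in> {..<N}" and l: "l \<in> {..<P}"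
      have gk: "g k \<in> A" "adj (g k) \<in> A" using g k adjA by auto
      have xc: "adj x \<circ> c l \<in> X" using XtA[OF ix(2)] c l by auto
      show "cinner (\<pi> (g k) (\<eta> k)) (\<pi> (adj x \<circ> c l) (\<theta> l)) = cinner (\<eta> k) (\<pi> (adj (g k) \<circ> adj x \<circ> c l) (\<theta> l))"
        using pi_adj_inner[of "g k"] pi_left[OF gk(2) xc] gk A_X by (auto simp: o_assoc)
    qed
    also have "\<dots> = (\<Sum>k<N. \<Sum>l<P. cinner (\<pi> (x \<circ> g k) (\<eta> k)) (\<pi> (c l) (\<theta> l)))"
    proof (intro sum.cong refl)
      fix k l assume k: "k \<in> {..<N}" and l: "l \<in> {..<P}"
      have gk: "g k \<in> A" using g k by auto
      have xg: "x \<circ> g k \<in> X" using XtA[OF x gk] .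
      have axg: "adj (x \<circ> g k) \<in> X" using adjX[OF xg] by blast
      have cl: "c l \<in> A" using c l by auto
      have e: "adj (x \<circ> g k) = adj (g k) \<circ> adj x" by (rule adj_comp_eq[OF x gk])
      show "cinner (\<eta> k) (\<pi> (adj (g k) \<circ> adj x \<circ> c l) (\<theta> l)) = cinner (\<pi> (x \<circ> g k) (\<eta> k)) (\<pi> (c l) (\<theta> l))"
        using pi_adj_inner[OF xg] pi_right[OF axg cl] e by simp
    qed
    also have "\<dots> = cinner w \<omega>"
      unfolding w_def \<omega>_def Sv_def Rv_def by (simp only: cinner_sum_left, simp only: cinner_sum_right)
    finally show ?thesis .
  qed
  have "0 \<le> Re (cinner \<omega> \<omega> + cinner \<omega> (- w) + (cinner (- \<xi>) w' + cinner (- \<xi>) (cscale (complex_of_real (t\<^sup>2)) (- \<xi>))))"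
    using G unfolding Qeq by blast
  also have "\<dots> = (norm \<omega>)\<^sup>2 - 2 * Re (cinner \<omega> w) + t\<^sup>2 * (norm \<xi>)\<^sup>2"
  proof -
    have "Re (cinner (- \<xi>) w') = - Re (cinner \<omega> w)"
      using cross by (simp add: cinner_minus_left cinner_commute[of w \<omega>])
    then show ?thesis
      by (simp add: cinner_minus_left cinner_minus_right cinner_cscale_right cinner_self_Re)
  qed
  finally show ?thesis unfolding \<omega>_def w_def \<xi>_def .
qed

end


context ext_setting
begin

lemma KB:
  assumes x: "x \<in> Xt" and t: "t \<ge> 0" and bx: "\<And>v. norm (x v) \<le> t * norm v"
    and g: "\<forall>k<N. g k \<in> A"
  shows "norm (Sv x N g \<eta>) \<le> t * norm (Rv N g \<eta>)"
proof -
  define w where "w = Sv x N g \<eta>"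
  define \<xi> where "\<xi> = Rv N g \<eta>"
  obtain NN cc \<theta>\<theta> where d: "\<forall>j k. k < NN j \<longrightarrow> cc j k \<in> A" "(\<lambda>j. Rv (NN j) (cc j) (\<theta>\<theta> j)) \<longlonglongrightarrow> w"
    using density by blast
  define f where "f \<omega> = (norm \<omega>)\<^sup>2 - 2 * Re (cinner \<omega> w) + t\<^sup>2 * (norm \<xi>)\<^sup>2" for \<omega>
  have "(\<lambda>j. f (Rv (NN j) (cc j) (\<theta>\<theta> j))) \<longlonglongrightarrow> f w"
    unfolding f_def by (intro tendsto_intros tendsto_cinner d(2))
  moreover have "\<forall>j. 0 \<le> f (Rv (NN j) (cc j) (\<theta>\<theta> j))"
    unfolding f_def w_def \<xi>_def using KB_form[OF x t bx g] d(1) by blast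
  ultimately have "0 \<le> f w" by (intro LIMSEQ_le_const) auto
  then have sq: "(norm w)\<^sup>2 \<le> (t * norm \<xi>)\<^sup>2" unfolding f_def by (simp add: cinner_self_Re power_mult_distrib)
  have "norm w \<le> t * norm \<xi>" by (rule power2_le_imp_le[OF sq]) (use t in simp)
  then show ?thesis unfolding w_def \<xi>_def .
qed

lemma Rv_cat: "Rv (N + N') (\<lambda>k. if k < N then g k else g' (k - N)) (\<lambda>k. if k < N then \<eta> k else \<eta>' (k - N)) = Rv N g \<eta> + Rv N' g' \<eta>'"
  unfolding Rv_def sum_split_add by simp

lemma Sv_cat: "Sv x (N + N') (\<lambda>k. if k < N then g k else g' (k - N)) (\<lambda>k. if k < N then \<eta> k else \<eta>' (k - N)) = Sv x N g \<eta> + Sv x N' g' \<eta>'"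
  unfolding Sv_def sum_split_add by simp

lemma Rv_neg: "\<forall>k<N. g k \<in> A \<Longrightarrow> Rv N g (\<lambda>k. - \<eta> k) = - Rv N g \<eta>"
  unfolding Rv_def using A_X by (simp add: pi_minus sum_negf[symmetric] subset_iff)

lemma Sv_neg: "x \<in> Xt \<Longrightarrow> \<forall>k<N. g k \<in> A \<Longrightarrow> Sv x N g (\<lambda>k. - \<eta> k) = - Sv x N g \<eta>"
  unfolding Sv_def using XtA by (simp add: pi_minus sum_negf[symmetric])

lemma Rv_scale: "\<forall>k<N. g k \<in> A \<Longrightarrow> Rv N g (\<lambda>k. cscale c (\<eta> k)) = cscale c (Rv N g \<eta>)"
  unfolding Rv_def using pi_bopA by (simp add: bopD_cscale cscale_sum_right)

lemma Sv_scale: "x \<in> Xt \<Longrightarrow> \<forall>k<N. g k \<in> A \<Longrightarrow> Sv x N g (\<lambda>k. cscale c (\<eta> k)) = cscale c (Sv x N g \<eta>)"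
  unfolding Sv_def using XtA pi_bop by (simp add: bopD_cscale cscale_sum_right)

lemma KB_diff:
  assumes x: "x \<in> Xt" and t: "t \<ge> 0" and bx: "\<And>v. norm (x v) \<le> t * norm v"
    and g: "\<forall>k<N. g k \<in> A" and g': "\<forall>k<N'. g' k \<in> A"
  shows "norm (Sv x N g \<eta> - Sv x N' g' \<eta>') \<le> t * norm (Rv N g \<eta> - Rv N' g' \<eta>')"
proof -
  define G where "G = (\<lambda>k. if k < N then g k else g' (k - N))"
  define E where "E = (\<lambda>k. if k < N then \<eta> k else - \<eta>' (k - N))"
  have GA: "\<forall>k<N+N'. G k \<in> A" using g g' by (auto simp: G_def)
  have "Rv (N+N') G E = Rv N g \<eta> - Rv N' g' \<eta>'"
    unfolding G_def E_def using Rv_cat[of N N' g g' \<eta> "\<lambda>k. - \<eta>' k"] Rv_neg[OF g'] by simp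
  moreover have "Sv x (N+N') G E = Sv x N g \<eta> - Sv x N' g' \<eta>'"
    unfolding G_def E_def using Sv_cat[of x N N' g g' \<eta> "\<lambda>k. - \<eta>' k"] Sv_neg[OF x g'] by simp
  ultimately show ?thesis using KB[OF x t bx GA, of E] by simp
qed

definition Tt :: "('h \<Rightarrow> 'h) \<Rightarrow> 'k \<Rightarrow> 'k" where
  "Tt x u = (THE w. \<exists>N g \<eta>. (\<forall>j k. k < N j \<longrightarrow> g j k \<in> A) \<and> (\<lambda>j. Rv (N j) (g j) (\<eta> j)) \<longlonglongrightarrow> u
      \<and> (\<lambda>j. Sv x (N j) (g j) (\<eta> j)) \<longlonglongrightarrow> w)"

lemma Tt_lim:
  assumes x: "x \<in> Xt" and gA: "\<forall>j k. k < N j \<longrightarrow> g j k \<in> A"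
    and R: "(\<lambda>j. Rv (N j) (g j) (\<eta> j)) \<longlonglongrightarrow> u"
  shows "(\<lambda>j. Sv x (N j) (g j) (\<eta> j)) \<longlonglongrightarrow> Tt x u"
proof -
  obtain t where t: "t \<ge> 0" "\<And>v. norm (x v) \<le> t * norm v" using bop_bound[OF bopXt[OF x]] by blast
  define S where "S j = Sv x (N j) (g j) (\<eta> j)" for j
  define Rs where "Rs j = Rv (N j) (g j) (\<eta> j)" for j
  have dS: "dist (S i) (S j) \<le> t * dist (Rs i) (Rs j)" for i j
    unfolding S_def Rs_def dist_norm using KB_diff[OF x t(1) t(2)] gA by blast
  have "Cauchy Rs" using R unfolding Rs_def by (rule LIMSEQ_imp_Cauchy)
  have "Cauchy S"
  proof (rule metric_CauchyI)
    fix e :: real assume e: "e > 0"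
    then have e': "e / (t + 1) > 0" using t(1) by simp
    obtain M where M: "\<And>m n. m \<ge> M \<Longrightarrow> n \<ge> M \<Longrightarrow> dist (Rs m) (Rs n) < e / (t + 1)"
      using metric_CauchyD[OF \<open>Cauchy Rs\<close> e'] by blast
    show "\<exists>M. \<forall>m\<ge>M. \<forall>n\<ge>M. dist (S m) (S n) < e"
    proof (intro exI allI impI)
      fix m n assume mn: "m \<ge> M" "n \<ge> M"
      have "dist (S m) (S n) \<le> t * dist (Rs m) (Rs n)" by (rule dS)
      also have "\<dots> \<le> t * (e / (t + 1))" using M[OF mn] t(1) by (intro mult_left_mono) simp_all
      also have "\<dots> < e" using e t(1) by (simp add: field_simps)
      finally show "dist (S m) (S n) < e" .
    qed
  qed
  then obtain w where w: "S \<longlonglongrightarrow> w" using Cauchy_convergent_iff convergent_def by blast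
  have uniq: "w' = w" if h: "\<exists>N' g' \<eta>'. (\<forall>j k. k < N' j \<longrightarrow> g' j k \<in> A) \<and> (\<lambda>j. Rv (N' j) (g' j) (\<eta>' j)) \<longlonglongrightarrow> u
      \<and> (\<lambda>j. Sv x (N' j) (g' j) (\<eta>' j)) \<longlonglongrightarrow> w'" for w'
  proof -
    obtain N' g' \<eta>' where h': "\<forall>j k. k < N' j \<longrightarrow> g' j k \<in> A" "(\<lambda>j. Rv (N' j) (g' j) (\<eta>' j)) \<longlonglongrightarrow> u"
      "(\<lambda>j. Sv x (N' j) (g' j) (\<eta>' j)) \<longlonglongrightarrow> w'" using h by blast
    have le: "norm (S j - Sv x (N' j) (g' j) (\<eta>' j)) \<le> t * norm (Rs j - Rv (N' j) (g' j) (\<eta>' j))" for j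
      unfolding S_def Rs_def using KB_diff[OF x t(1) t(2)] gA h'(1) by blast
    have "(\<lambda>j. t * norm (Rs j - Rv (N' j) (g' j) (\<eta>' j))) \<longlonglongrightarrow> t * norm (u - u)"
      using R h'(2) unfolding Rs_def by (intro tendsto_intros)
    then have z: "(\<lambda>j. t * norm (Rs j - Rv (N' j) (g' j) (\<eta>' j))) \<longlonglongrightarrow> 0" by simp
    have "(\<lambda>j. S j - Sv x (N' j) (g' j) (\<eta>' j)) \<longlonglongrightarrow> 0"
      by (rule Lim_null_comparison[OF _ z]) (simp add: le)
    moreover have "(\<lambda>j. S j - Sv x (N' j) (g' j) (\<eta>' j)) \<longlonglongrightarrow> w - w'"
      using w h'(3) by (intro tendsto_intros)
    ultimately have "w - w' = 0" using LIMSEQ_unique by blast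
    then show ?thesis by simp
  qed
  have ex: "\<exists>N g \<eta>. (\<forall>j k. k < N j \<longrightarrow> g j k \<in> A) \<and> (\<lambda>j. Rv (N j) (g j) (\<eta> j)) \<longlonglongrightarrow> u
      \<and> (\<lambda>j. Sv x (N j) (g j) (\<eta> j)) \<longlonglongrightarrow> w"
    using gA R w unfolding S_def by blast
  have "Tt x u = w" unfolding Tt_def by (rule the_equality, rule ex, rule uniq, assumption)
  then show ?thesis using w unfolding S_def by simp
qed

lemma Tt_R:
  assumes x: "x \<in> Xt" and g: "\<forall>k<N. g k \<in> A"
  shows "Tt x (Rv N g \<eta>) = Sv x N g \<eta>"
proof -
  have "(\<lambda>j. Sv x ((\<lambda>j. N) j) ((\<lambda>j. g) j) ((\<lambda>j. \<eta>) j)) \<longlonglongrightarrow> Tt x (Rv N g \<eta>)"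
    by (rule Tt_lim[OF x]) (use g in simp_all)
  then show ?thesis using tendsto_const by (rule LIMSEQ_unique)
qed

lemma Tt_pi:
  assumes x: "x \<in> Xt" and a: "a \<in> A"
  shows "Tt x (\<pi> a \<eta>) = \<pi> (x \<circ> a) \<eta>"
  using Tt_R[OF x, of 1 "\<lambda>k. a" "\<lambda>k. \<eta>"] a by (simp add: Rv_def Sv_def)

lemma Tt_add:
  assumes x: "x \<in> Xt"
  shows "Tt x (u + v) = Tt x u + Tt x v"
proof -
  obtain N g \<eta> where u: "\<forall>j k. k < N j \<longrightarrow> g j k \<in> A" "(\<lambda>j. Rv (N j) (g j) (\<eta> j)) \<longlonglongrightarrow> u"
    using density by blast
  obtain N' g' \<eta>' where v: "\<forall>j k. k < N' j \<longrightarrow> g' j k \<in> A" "(\<lambda>j. Rv (N' j) (g' j) (\<eta>' j)) \<longlonglongrightarrow> v"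
    using density by blast
  define G where "G j = (\<lambda>k. if k < N j then g j k else g' j (k - N j))" for j
  define E where "E j = (\<lambda>k. if k < N j then \<eta> j k else \<eta>' j (k - N j))" for j
  have GA: "\<forall>j k. k < N j + N' j \<longrightarrow> G j k \<in> A" using u(1) v(1) by (auto simp: G_def)
  have R: "(\<lambda>j. Rv (N j + N' j) (G j) (E j)) \<longlonglongrightarrow> u + v"
    unfolding G_def E_def Rv_cat using u(2) v(2) by (rule tendsto_add)
  have "(\<lambda>j. Sv x (N j + N' j) (G j) (E j)) \<longlonglongrightarrow> Tt x (u + v)" by (rule Tt_lim[OF x GA R])
  moreover have "(\<lambda>j. Sv x (N j + N' j) (G j) (E j)) \<longlonglongrightarrow> Tt x u + Tt x v"
    unfolding G_def E_def Sv_cat using Tt_lim[OF x u(1) u(2)] Tt_lim[OF x v(1) v(2)] by (rule tendsto_add)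
  ultimately show ?thesis using LIMSEQ_unique by blast
qed

lemma Tt_cscale:
  assumes x: "x \<in> Xt"
  shows "Tt x (cscale c u) = cscale c (Tt x u)"
proof -
  obtain N g \<eta> where u: "\<forall>j k. k < N j \<longrightarrow> g j k \<in> A" "(\<lambda>j. Rv (N j) (g j) (\<eta> j)) \<longlonglongrightarrow> u"
    using density by blast
  have R: "(\<lambda>j. Rv (N j) (g j) (\<lambda>k. cscale c (\<eta> j k))) \<longlonglongrightarrow> cscale c u"
    using tendsto_cscale[OF u(2), of c] u(1) by (simp add: Rv_scale)
  have "(\<lambda>j. Sv x (N j) (g j) (\<lambda>k. cscale c (\<eta> j k))) \<longlonglongrightarrow> Tt x (cscale c u)"
    by (rule Tt_lim[OF x u(1) R])
  moreover have "(\<lambda>j. Sv x (N j) (g j) (\<lambda>k. cscale c (\<eta> j k))) \<longlonglongrightarrow> cscale c (Tt x u)"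
    using tendsto_cscale[OF Tt_lim[OF x u(1) u(2)], of c] u(1) x by (simp add: Sv_scale)
  ultimately show ?thesis using LIMSEQ_unique by blast
qed

lemma Tt_bound:
  assumes x: "x \<in> Xt" and t: "t \<ge> 0" and bx: "\<And>v. norm (x v) \<le> t * norm v"
  shows "norm (Tt x u) \<le> t * norm u"
proof -
  obtain N g \<eta> where u: "\<forall>j k. k < N j \<longrightarrow> g j k \<in> A" "(\<lambda>j. Rv (N j) (g j) (\<eta> j)) \<longlonglongrightarrow> u"
    using density by blast
  have "(\<lambda>j. t * norm (Rv (N j) (g j) (\<eta> j)) - norm (Sv x (N j) (g j) (\<eta> j))) \<longlonglongrightarrow> t * norm u - norm (Tt x u)"
    using u(2) Tt_lim[OF x u(1) u(2)] by (intro tendsto_intros)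
  moreover have "\<forall>j. 0 \<le> t * norm (Rv (N j) (g j) (\<eta> j)) - norm (Sv x (N j) (g j) (\<eta> j))"
    using KB[OF x t bx] u(1) by simp
  ultimately have "0 \<le> t * norm u - norm (Tt x u)" by (intro LIMSEQ_le_const) auto
  then show ?thesis by simp
qed

lemma Tt_bop: "x \<in> Xt \<Longrightarrow> bop (Tt x)"
proof -
  assume x: "x \<in> Xt"
  obtain t where t: "t \<ge> 0" "\<And>v. norm (x v) \<le> t * norm v" using bop_bound[OF bopXt[OF x]] by blast
  show ?thesis unfolding bop_def using Tt_add[OF x] Tt_cscale[OF x] Tt_bound[OF x t] by blast
qed

end


context ext_setting
begin

lemma Tt_X: "y \<in> X \<Longrightarrow> Tt y = \<pi> y"
proof -
  assume y: "y \<in> X"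
  then have yt: "y \<in> Xt" using X_Xt by blast
  show ?thesis
  proof (rule eq_on_dense[OF Tt_bop[OF yt] pi_bop[OF y]])
    fix a \<eta> assume a: "a \<in> A"
    show "Tt y (\<pi> a \<eta>) = \<pi> y (\<pi> a \<eta>)" using Tt_pi[OF yt a] pi_right[OF y a] by simp
  qed
qed

lemma Tt_adj:
  assumes x: "x \<in> Xt"
  shows "is_adj (Tt x) (Tt (adj x))"
proof -
  have ax: "adj x \<in> Xt" using adjXt[OF x] by blast
  have step1: "cinner (Tt x (\<pi> a \<eta>)) (\<pi> b \<zeta>) = cinner (\<pi> a \<eta>) (Tt (adj x) (\<pi> b \<zeta>))"
    if a: "a \<in> A" and b: "b \<in> A" for a b \<eta> \<zeta>
  proof -
    have xa: "x \<circ> a \<in> X" by (rule XtA[OF x a])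
    have axa: "adj (x \<circ> a) \<in> X" using adjX[OF xa] by blast
    have aa: "adj a \<in> A" using adjA[OF a] by blast
    have axb: "adj x \<circ> b \<in> X" by (rule XtA[OF ax b])
    have "cinner (Tt x (\<pi> a \<eta>)) (\<pi> b \<zeta>) = cinner \<eta> (\<pi> (adj (x \<circ> a) \<circ> b) \<zeta>)"
      using Tt_pi[OF x a] pi_adj_inner[OF xa] pi_right[OF axa b] by simp
    also have "\<dots> = cinner \<eta> (\<pi> (adj a \<circ> (adj x \<circ> b)) \<zeta>)"
      using adj_comp_eq[OF x a] by (simp add: o_assoc)
    also have "\<dots> = cinner (\<pi> a \<eta>) (Tt (adj x) (\<pi> b \<zeta>))"
      using Tt_pi[OF ax b] pi_adj_inner[of a] a A_X pi_left[OF aa axb] by auto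
    finally show ?thesis .
  qed
  have step2: "cinner (Tt x u) (\<pi> b \<zeta>) = cinner u (Tt (adj x) (\<pi> b \<zeta>))" if b: "b \<in> A" for u b \<zeta>
  proof -
    have "(\<lambda>u. cinner (Tt x u) (\<pi> b \<zeta>) - cinner u (Tt (adj x) (\<pi> b \<zeta>))) u = 0"
    proof (rule dense_zero_K[where f="\<lambda>u. cinner (Tt x u) (\<pi> b \<zeta>) - cinner u (Tt (adj x) (\<pi> b \<zeta>))"])
      show "cinner (Tt x (u1 + u2)) (\<pi> b \<zeta>) - cinner (u1 + u2) (Tt (adj x) (\<pi> b \<zeta>)) =
            (cinner (Tt x u1) (\<pi> b \<zeta>) - cinner u1 (Tt (adj x) (\<pi> b \<zeta>))) + (cinner (Tt x u2) (\<pi> b \<zeta>) - cinner u2 (Tt (adj x) (\<pi> b \<zeta>)))" for u1 u2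
        by (simp add: Tt_add[OF x] cinner_add_left)
      show "isCont (\<lambda>u. cinner (Tt x u) (\<pi> b \<zeta>) - cinner u (Tt (adj x) (\<pi> b \<zeta>))) y" for y
        by (intro continuous_diff continuous_cinner continuous_const continuous_ident isCont_bop Tt_bop x)
      show "cinner (Tt x (\<pi> a \<eta>)) (\<pi> b \<zeta>) - cinner (\<pi> a \<eta>) (Tt (adj x) (\<pi> b \<zeta>)) = 0" if "a \<in> A" for a \<eta>
        using step1[OF that b] by simp
    qed
    then show ?thesis by simp
  qed
  have "cinner (Tt x u) v = cinner u (Tt (adj x) v)" for u v
  proof -
    have "(\<lambda>v. cinner (Tt x u) v - cinner u (Tt (adj x) v)) v = 0"
    proof (rule dense_zero_K[where f="\<lambda>v. cinner (Tt x u) v - cinner u (Tt (adj x) v)"])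
      show "cinner (Tt x u) (v1 + v2) - cinner u (Tt (adj x) (v1 + v2)) =
            (cinner (Tt x u) v1 - cinner u (Tt (adj x) v1)) + (cinner (Tt x u) v2 - cinner u (Tt (adj x) v2))" for v1 v2
        by (simp add: Tt_add[OF ax] cinner_add_right)
      show "isCont (\<lambda>v. cinner (Tt x u) v - cinner u (Tt (adj x) v)) y" for y
        by (intro continuous_diff continuous_cinner continuous_const continuous_ident isCont_bop Tt_bop ax)
      show "cinner (Tt x u) (\<pi> b \<zeta>) - cinner u (Tt (adj x) (\<pi> b \<zeta>)) = 0" if "b \<in> A" for b \<zeta>
        using step2[OF that] by simp
    qed
    then show ?thesis by simp
  qed
  then show ?thesis unfolding is_adj_def by blast
qed

lemma Tt_adj_eq: "x \<in> Xt \<Longrightarrow> Tt (adj x) = adj (Tt x)"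
  using adj_eq[OF Tt_adj] by metis

lemma Tt_piy:
  assumes b: "b \<in> At" and y: "y \<in> X"
  shows "Tt b (\<pi> y \<eta>) = \<pi> (b \<circ> y) \<eta>"
proof -
  have bt: "b \<in> Xt" using b At_Xt by blast
  have ib: "is_adj b (adj b)" "adj b \<in> Xt" using adjXt[OF bt] by auto
  have by': "b \<circ> y \<in> X" by (rule AtX[OF b y])
  define d where "d = Tt b (\<pi> y \<eta>) - \<pi> (b \<circ> y) \<eta>"
  have z: "cinner d v = 0" for v
  proof (rule dense_zero_K[where f="\<lambda>v. cinner d v"])
    show "cinner d (v1 + v2) = cinner d v1 + cinner d v2" for v1 v2 by (rule cinner_add_right)
    show "isCont (\<lambda>v. cinner d v) x" for x by (intro continuous_cinner continuous_const continuous_ident)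
    fix c \<zeta> assume c: "c \<in> A"
    have ca: "adj c \<in> A" using adjA[OF c] by blast
    have bc: "adj b \<circ> c \<in> X" by (rule XtA[OF ib(2) c])
    have e1: "adj (adj b \<circ> c) = adj c \<circ> b"
      using adj_comp_eq[OF ib(2) c] adj_adj[OF ib(1)] by simp
    have cb: "adj c \<circ> b \<in> A" using ideal[OF ca b] by blast
    have "cinner (Tt b (\<pi> y \<eta>)) (\<pi> c \<zeta>) = cinner (\<pi> y \<eta>) (\<pi> (adj b \<circ> c) \<zeta>)"
      using Tt_adj[OF bt] Tt_pi[OF ib(2) c] unfolding is_adj_def by simp
    also have "\<dots> = cinner (\<pi> (adj c \<circ> b \<circ> y) \<eta>) \<zeta>"
      using pi_adj_inner'[OF bc] e1 pi_left[OF cb y] by simp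
    also have "\<dots> = cinner (\<pi> (b \<circ> y) \<eta>) (\<pi> c \<zeta>)"
      using pi_adj_inner'[of c] c A_X pi_left[OF ca by'] by (auto simp: o_assoc)
    finally show "cinner d (\<pi> c \<zeta>) = 0" unfolding d_def by (simp add: cinner_diff_left)
  qed
  have "d = 0" using z[of d] by (simp add: cinner_self_zero_iff)
  then show ?thesis unfolding d_def by simp
qed

lemma Tt_comp:
  assumes b: "b \<in> At" and x: "x \<in> Xt"
  shows "Tt (b \<circ> x) = Tt b \<circ> Tt x"
proof (rule eq_on_dense[OF Tt_bop[OF AtXt[OF b x]] bop_comp[OF Tt_bop Tt_bop]])
  show "b \<in> Xt" using b At_Xt by blast
  show "x \<in> Xt" by (rule x)
  fix a \<eta> assume a: "a \<in> A"
  have xa: "x \<circ> a \<in> X" by (rule XtA[OF x a])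
  show "Tt (b \<circ> x) (\<pi> a \<eta>) = (Tt b \<circ> Tt x) (\<pi> a \<eta>)"
    using Tt_pi[OF AtXt[OF b x] a] Tt_pi[OF x a] Tt_piy[OF b xa] by (simp add: o_assoc)
qed

lemma Tt_addx:
  assumes x: "x \<in> Xt" and y: "y \<in> Xt"
  shows "Tt (\<lambda>v. x v + y v) = (\<lambda>u. Tt x u + Tt y u)"
proof -
  have s: "(\<lambda>v. x v + y v) \<in> Xt" by (rule subspace_add[OF subXt x y])
  show ?thesis
  proof (rule eq_on_dense[OF Tt_bop[OF s] bop_add[OF Tt_bop[OF x] Tt_bop[OF y]]])
    fix a \<eta> assume a: "a \<in> A"
    have e: "(\<lambda>v. x v + y v) \<circ> a = (\<lambda>v. (x \<circ> a) v + (y \<circ> a) v)" by (simp add: comp_def)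
    show "Tt (\<lambda>v. x v + y v) (\<pi> a \<eta>) = Tt x (\<pi> a \<eta>) + Tt y (\<pi> a \<eta>)"
      using Tt_pi[OF s a] Tt_pi[OF x a] Tt_pi[OF y a] e pi_add[OF XtA[OF x a] XtA[OF y a]] by simp
  qed
qed

lemma Tt_scx:
  assumes x: "x \<in> Xt"
  shows "Tt (\<lambda>v. cscale c (x v)) = (\<lambda>u. cscale c (Tt x u))"
proof -
  have s: "(\<lambda>v. cscale c (x v)) \<in> Xt" by (rule subspace_cscale[OF subXt x])
  show ?thesis
  proof (rule eq_on_dense[OF Tt_bop[OF s] bop_cscale[OF Tt_bop[OF x]]])
    fix a \<eta> assume a: "a \<in> A"
    have e: "(\<lambda>v. cscale c (x v)) \<circ> a = (\<lambda>v. cscale c ((x \<circ> a) v))" by (simp add: comp_def)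
    show "Tt (\<lambda>v. cscale c (x v)) (\<pi> a \<eta>) = cscale c (Tt x (\<pi> a \<eta>))"
      using Tt_pi[OF s a] Tt_pi[OF x a] e pi_cscale[OF XtA[OF x a]] by simp
  qed
qed

lemma Tt_id: "Tt (\<lambda>v. v) = (\<lambda>u. u)"
proof (rule eq_on_dense[OF Tt_bop[OF id_Xt] bop_id])
  fix a \<eta> assume a: "a \<in> A"
  show "Tt (\<lambda>v. v) (\<pi> a \<eta>) = \<pi> a \<eta>" using Tt_pi[OF id_Xt a] by (simp add: comp_def)
qed

lemma Tt_zero0: "Tt (\<lambda>v. 0) = (\<lambda>u. 0)"
  using Tt_X[OF zeroX] pi_zero by (simp add: zero_op_def)

lemma Tt_cs: "Tt (\<lambda>v. cscale c v) = (\<lambda>u. cscale c u)"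
  using Tt_scx[OF id_Xt, of c] Tt_id by simp

end


context ext_setting
begin

lemma density_fam:
  "\<exists>NN gg \<eta>\<eta>. \<forall>i. (\<forall>j k. k < NN i j \<longrightarrow> gg i j k \<in> A) \<and> (\<lambda>j. Rv (NN i j) (gg i j) (\<eta>\<eta> i j)) \<longlonglongrightarrow> \<xi> i"
proof -
  have "\<forall>i. \<exists>p. (\<forall>j k. k < fst p j \<longrightarrow> fst (snd p) j k \<in> A) \<and> (\<lambda>j. Rv (fst p j) (fst (snd p) j) (snd (snd p) j)) \<longlonglongrightarrow> \<xi> i"
  proof
    fix i
    obtain N g \<eta> where "\<forall>j k. k < N j \<longrightarrow> g j k \<in> A" "(\<lambda>j. Rv (N j) (g j) (\<eta> j)) \<longlonglongrightarrow> \<xi> i"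
      using density by blast
    then show "\<exists>p. (\<forall>j k. k < fst p j \<longrightarrow> fst (snd p) j k \<in> A) \<and> (\<lambda>j. Rv (fst p j) (fst (snd p) j) (snd (snd p) j)) \<longlonglongrightarrow> \<xi> i"
      by (rule_tac exI[where x="(N, g, \<eta>)"]) simp
  qed
  from choice[OF this] obtain P where P: "\<forall>i. (\<forall>j k. k < fst (P i) j \<longrightarrow> fst (snd (P i)) j k \<in> A) \<and> (\<lambda>j. Rv (fst (P i) j) (fst (snd (P i)) j) (snd (snd (P i)) j)) \<longlonglongrightarrow> \<xi> i"
    by blast
  show ?thesis
    by (rule_tac exI[where x="\<lambda>i. fst (P i)"], rule_tac exI[where x="\<lambda>i. fst (snd (P i))"], rule_tac exI[where x="\<lambda>i. snd (snd (P i))"]) (use P in simp)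
qed

lemma Tt_pos:
  assumes M: "\<forall>i<n. \<forall>j<n. M i j \<in> Xt" and pos: "mat_pos n M"
  shows "mat_pos n (\<lambda>i j. Tt (M i j))"
  unfolding mat_pos_def
proof (intro allI)
  fix \<xi> :: "nat \<Rightarrow> 'k"
  define F where "F \<zeta> = (\<Sum>i<n. cinner (\<zeta> i) (mat_app n (\<lambda>i j. Tt (M i j)) \<zeta> i))" for \<zeta>
  obtain NN gg \<eta>\<eta> where D: "\<And>i. (\<forall>j k. k < NN i j \<longrightarrow> gg i j k \<in> A)" "\<And>i. (\<lambda>j. Rv (NN i j) (gg i j) (\<eta>\<eta> i j)) \<longlonglongrightarrow> \<xi> i"
    using density_fam[of \<xi>] by blast
  define \<xi>s where "\<xi>s j i = Rv (NN i j) (gg i j) (\<eta>\<eta> i j)" for j i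
  have each: "Im (F (\<xi>s j)) = 0 \<and> 0 \<le> Re (F (\<xi>s j))" for j
  proof -
    have "\<forall>i<n. \<forall>k<NN i j. gg i j k \<in> A" using D(1) by blast
    then obtain N g \<eta> where p: "\<forall>i<n. \<forall>k<N. g i k \<in> A" "\<forall>i<n. Rv N (g i) \<eta> = Rv (NN i j) (gg i j) (\<eta>\<eta> i j)"
      using pad[of n "\<lambda>i. NN i j" "\<lambda>i. gg i j" "\<lambda>i. \<eta>\<eta> i j"] by blast
    have "F (\<xi>s j) = (\<Sum>i<n. \<Sum>j'<n. cinner (\<Sum>k<N. \<pi> (g i k) (\<eta> k)) (\<Sum>l<N. \<pi> (M i j' \<circ> g j' l) (\<eta> l)))"
      unfolding F_def mat_app_def
    proof (intro sum.cong refl)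
      fix i assume i: "i \<in> {..<n}"
      have "(\<Sum>j'<n. Tt (M i j') (\<xi>s j j')) = (\<Sum>j'<n. Sv (M i j') N (g j') \<eta>)"
      proof (intro sum.cong refl)
        fix j' assume j': "j' \<in> {..<n}"
        have "\<xi>s j j' = Rv N (g j') \<eta>" using p(2) j' unfolding \<xi>s_def by simp
        then show "Tt (M i j') (\<xi>s j j') = Sv (M i j') N (g j') \<eta>"
          using Tt_R[of "M i j'" N "g j'" \<eta>] M p(1) i j' by simp
      qed
      moreover have "\<xi>s j i = (\<Sum>k<N. \<pi> (g i k) (\<eta> k))" using p(2) i unfolding \<xi>s_def Rv_def by simp
      ultimately show "cinner (\<xi>s j i) (\<Sum>j'<n. Tt (M i j') (\<xi>s j j')) =
          (\<Sum>j'<n. cinner (\<Sum>k<N. \<pi> (g i k) (\<eta> k)) (\<Sum>l<N. \<pi> (M i j' \<circ> g j' l) (\<eta> l)))"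
        by (simp add: Sv_def cinner_sum_right)
    qed
    then show ?thesis using GP[OF M pos p(1), of \<eta>] by simp
  qed
  have conv: "(\<lambda>j. F (\<xi>s j)) \<longlonglongrightarrow> F \<xi>"
    unfolding F_def mat_app_def \<xi>s_def
    by (intro tendsto_sum tendsto_cinner D(2) bop_tendsto[OF Tt_bop]) (use M in auto)
  have "(\<lambda>j. Im (F (\<xi>s j))) \<longlonglongrightarrow> Im (F \<xi>)" by (rule tendsto_Im[OF conv])
  moreover have "(\<lambda>j. Im (F (\<xi>s j))) = (\<lambda>j. 0)" using each by simp
  ultimately have "(\<lambda>j. (0::real)) \<longlonglongrightarrow> Im (F \<xi>)" by simp
  then have "0 = Im (F \<xi>)" by (rule LIMSEQ_unique[OF tendsto_const])
  then have im: "Im (F \<xi>) = 0" by simp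
  have "(\<lambda>j. Re (F (\<xi>s j))) \<longlonglongrightarrow> Re (F \<xi>)" by (rule tendsto_Re[OF conv])
  then have re: "0 \<le> Re (F \<xi>)" using each by (intro LIMSEQ_le_const) auto
  show "Im (\<Sum>i<n. cinner (\<xi> i) (mat_app n (\<lambda>i j. Tt (M i j)) \<xi> i)) = 0 \<and>
        0 \<le> Re (\<Sum>i<n. cinner (\<xi> i) (mat_app n (\<lambda>i j. Tt (M i j)) \<xi> i))"
    using im re unfolding F_def by simp
qed

end


context ext_setting
begin

lemma Tt_norm:
  assumes M: "\<forall>i<n. \<forall>j<n. M i j \<in> Xt"
  shows "matnorm n (\<lambda>i j. Tt (M i j)) \<le> matnorm n M"
proof -
  define t where "t = matnorm n M"
  have bM: "\<forall>i<n. \<forall>j<n. bop (M i j)" using M bopXt by blast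
  have t0: "0 \<le> t" using matnorm_props(2)[OF bM] by (simp add: t_def)
  have tb: "\<forall>\<zeta>. vnorm2 n (mat_app n M \<zeta>) \<le> t\<^sup>2 * vnorm2 n \<zeta>" using matnorm_props(3)[OF bM] by (simp add: t_def)
  define MA where "MA = (\<lambda>i j. adj (M i j))"
  define Mb where "Mb = blk n t M MA"
  have posMb: "mat_pos (2*n) Mb" unfolding Mb_def
    by (rule blk_pos) (use M adjXt tb t0 in \<open>auto simp: MA_def\<close>)
  have cscXt: "(\<lambda>v. cscale (complex_of_real (t\<^sup>2)) v) \<in> Xt" using subspace_cscale[OF subXt id_Xt] by simp
  have zXt: "(\<lambda>v::'h. 0) \<in> Xt" using zeroXt by (simp add: zero_op_def)
  have MbXt: "\<forall>i<2*n. \<forall>j<2*n. Mb i j \<in> Xt"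
  proof (intro allI impI)
    fix i j assume ij: "i < 2*n" "j < 2*n"
    show "Mb i j \<in> Xt"
    proof (cases "i < n")
      case True
      then show ?thesis using ij M id_Xt zXt by (auto simp: Mb_def blk_def)
    next
      case False
      then show ?thesis using ij M adjXt cscXt zXt by (auto simp: Mb_def blk_def MA_def)
    qed
  qed
  have posT: "mat_pos (2*n) (\<lambda>i j. Tt (Mb i j))" by (rule Tt_pos[OF MbXt posMb])
  define TM where "TM = (\<lambda>i j. Tt (M i j))"
  define TMA where "TMA = (\<lambda>i j. Tt (adj (M i j)))"
  have eqT: "(\<lambda>i j. Tt (Mb i j)) = blk n t TM TMA"
    by (intro ext) (simp add: Mb_def blk_def TM_def TMA_def MA_def Tt_id Tt_zero0 Tt_cs)
  have bTM: "bop (TM i j)" if "i < n" "j < n" for i j using M that Tt_bop by (simp add: TM_def)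
  have bnd: "vnorm2 n (mat_app n TM \<xi>) \<le> t\<^sup>2 * vnorm2 n \<xi>" for \<xi>
  proof -
    define \<omega> where "\<omega> = mat_app n TM \<xi>"
    define \<zeta> where "\<zeta> i = (if i < n then \<omega> i else - \<xi> (i - n))" for i
    define U where "U = (\<Sum>i<n. cinner (\<omega> i) (\<omega> i))"
    define V where "V = (\<Sum>i<n. cinner (\<xi> i) (\<xi> i))"
    have hi: "(\<lambda>j. \<zeta> (n+j)) = (\<lambda>j. - \<xi> j)" by (simp add: \<zeta>_def)
    have p1: "(\<Sum>i<n. cinner (\<zeta> i) (\<zeta> i)) = U" unfolding U_def by (intro sum.cong refl) (simp add: \<zeta>_def)
    have mneg: "mat_app n TM (\<lambda>j. - \<xi> j) i = - \<omega> i" if "i < n" for i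
    proof -
      have "mat_app n TM (\<lambda>j. - \<xi> j) i = (\<Sum>j<n. - TM i j (\<xi> j))"
        unfolding mat_app_def using bTM that by (intro sum.cong refl) (simp add: bop_minus)
      then show ?thesis by (simp add: \<omega>_def mat_app_def sum_negf)
    qed
    have p2: "(\<Sum>i<n. cinner (\<zeta> i) (mat_app n TM (\<lambda>j. \<zeta> (n+j)) i)) = - U"
    proof -
      have "(\<Sum>i<n. cinner (\<zeta> i) (mat_app n TM (\<lambda>j. \<zeta> (n+j)) i)) = (\<Sum>i<n. - cinner (\<omega> i) (\<omega> i))"
        unfolding hi by (intro sum.cong refl) (simp add: \<zeta>_def mneg cinner_minus_right)
      then show ?thesis by (simp add: U_def sum_negf)
    qed
    have p3: "(\<Sum>i<n. cinner (\<zeta> (n+i)) (\<Sum>j<n. TMA j i (\<zeta> j))) = - U"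
    proof -
      have "(\<Sum>i<n. cinner (\<zeta> (n+i)) (\<Sum>j<n. TMA j i (\<zeta> j))) = (\<Sum>i<n. \<Sum>j<n. - cinner (TM j i (\<xi> i)) (\<omega> j))"
      proof (intro sum.cong refl)
        fix i assume i: "i \<in> {..<n}"
        have "cinner (\<zeta> (n+i)) (\<Sum>j<n. TMA j i (\<zeta> j)) = (\<Sum>j<n. cinner (- \<xi> i) (TMA j i (\<omega> j)))"
          unfolding cinner_sum_right by (intro sum.cong refl) (simp add: \<zeta>_def)
        also have "\<dots> = (\<Sum>j<n. - cinner (TM j i (\<xi> i)) (\<omega> j))"
        proof (intro sum.cong refl)
          fix j assume j: "j \<in> {..<n}"
          have "is_adj (TM j i) (TMA j i)" unfolding TM_def TMA_def using Tt_adj M i j by simp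
          then show "cinner (- \<xi> i) (TMA j i (\<omega> j)) = - cinner (TM j i (\<xi> i)) (\<omega> j)"
            unfolding is_adj_def by (simp add: cinner_minus_left)
        qed
        finally show "cinner (\<zeta> (n+i)) (\<Sum>j<n. TMA j i (\<zeta> j)) = (\<Sum>j<n. - cinner (TM j i (\<xi> i)) (\<omega> j))" .
      qed
      also have "\<dots> = (\<Sum>j<n. \<Sum>i<n. - cinner (TM j i (\<xi> i)) (\<omega> j))" by (rule sum.swap)
      also have "\<dots> = (\<Sum>j<n. - cinner (\<omega> j) (\<omega> j))"
        by (simp add: \<omega>_def mat_app_def cinner_sum_left sum_negf)
      finally show ?thesis by (simp add: U_def sum_negf)
    qed
    have p4: "(\<Sum>i<n. cinner (\<zeta> (n+i)) (\<zeta> (n+i))) = V"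
      unfolding V_def by (simp add: \<zeta>_def cinner_minus_left cinner_minus_right)
    have "0 \<le> Re (\<Sum>i<2*n. cinner (\<zeta> i) (mat_app (2*n) (blk n t TM TMA) \<zeta> i))"
      using posT unfolding eqT mat_pos_def by blast
    also have "(\<Sum>i<2*n. cinner (\<zeta> i) (mat_app (2*n) (blk n t TM TMA) \<zeta> i)) = U + - U + - U + complex_of_real (t\<^sup>2) * V"
      unfolding blk_form p1 p2 p3 p4 by simp
    finally have "0 \<le> t\<^sup>2 * Re V - Re U" by simp
    moreover have "Re U = vnorm2 n \<omega>" "Re V = vnorm2 n \<xi>" unfolding U_def V_def by (simp_all add: vnorm2_Re)
    ultimately show ?thesis unfolding \<omega>_def by simp
  qed
  have "matnorm n TM \<le> t"
    unfolding matnorm_def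
  proof (rule cSup_least)
    show "{sqrt (vnorm2 n (mat_app n TM \<xi>)) | \<xi>. vnorm2 n \<xi> \<le> 1} \<noteq> {}"
    proof -
      have "sqrt (vnorm2 n (mat_app n TM (\<lambda>i. 0))) \<in> {sqrt (vnorm2 n (mat_app n TM \<xi>)) | \<xi>. vnorm2 n \<xi> \<le> 1}"
        by (rule CollectI, rule exI[where x="\<lambda>i::nat. 0::'k"]) (simp add: vnorm2_def)
      then show ?thesis by blast
    qed
  next
    fix r assume "r \<in> {sqrt (vnorm2 n (mat_app n TM \<xi>)) | \<xi>. vnorm2 n \<xi> \<le> 1}"
    then obtain \<xi> where r: "r = sqrt (vnorm2 n (mat_app n TM \<xi>))" "vnorm2 n \<xi> \<le> 1" by blast
    have "r \<le> sqrt (t\<^sup>2 * vnorm2 n \<xi>)" unfolding r(1) using bnd by simp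
    also have "\<dots> \<le> sqrt (t\<^sup>2 * 1)" using r(2) by (intro real_sqrt_le_mono mult_left_mono) simp_all
    also have "\<dots> = t" using t0 by simp
    finally show "r \<le> t" .
  qed
  then show ?thesis by (simp add: TM_def t_def)
qed

lemma ccp_Tt: "ccp Xt Tt"
  unfolding ccp_def
  using Tt_bop Tt_addx Tt_scx Tt_adj_eq Tt_norm Tt_pos by blast

lemma rep_Tt: "opsys_rep At Xt Tt"
  unfolding opsys_rep_def using ccp_Tt Tt_comp by blast

lemma uniq:
  assumes r: "opsys_rep At Xt \<rho>" and e: "\<forall>x\<in>X. \<rho> x = \<pi> x" and x: "x \<in> Xt"
  shows "\<rho> x = Tt x"
proof -
  have ccp: "ccp Xt \<rho>" and mult: "\<And>a y. a \<in> At \<Longrightarrow> y \<in> Xt \<Longrightarrow> \<rho> (a \<circ> y) = \<rho> a \<circ> \<rho> y"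
    using r unfolding opsys_rep_def by blast+
  show ?thesis
  proof (rule eq_on_dense[OF ccpD(1)[OF ccp x] Tt_bop[OF x]])
    fix a \<eta> assume a: "a \<in> A"
    have aX: "a \<in> X" and aXt: "a \<in> Xt" using a A_X X_Xt by blast+
    have aa: "adj a \<in> A" and ax: "adj x \<in> Xt" using adjA[OF a] adjXt[OF x] by blast+
    have z: "adj a \<circ> adj x \<in> Xt" using AXt[OF aa ax] X_Xt by blast
    have m: "\<rho> (adj a \<circ> adj x) = \<rho> (adj a) \<circ> \<rho> (adj x)" using mult[OF _ ax] aa A_At by blast
    have rr: "\<rho> (x \<circ> a) = \<rho> x \<circ> \<rho> a"
      by (rule rep_right[OF ccp opsysD(6)[OF opsys_t] x aXt z m])
    have xa: "x \<circ> a \<in> X" by (rule XtA[OF x a])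
    have "\<rho> x (\<pi> a \<eta>) = \<rho> x (\<rho> a \<eta>)" using e aX by simp
    also have "\<dots> = \<rho> (x \<circ> a) \<eta>" using rr by simp
    also have "\<dots> = \<pi> (x \<circ> a) \<eta>" using e xa by simp
    also have "\<dots> = Tt x (\<pi> a \<eta>)" using Tt_pi[OF x a] by simp
    finally show "\<rho> x (\<pi> a \<eta>) = Tt x (\<pi> a \<eta>)" .
  qed
qed

end

theorem lemma3p9:
  fixes A X At Xt :: "('h::chilbert \<Rightarrow> 'h) set"
  assumes "cstar_opsys A X"
    and "unitization A X At Xt"
  shows "At \<subseteq> mult_alg A \<and> Xt \<subseteq> mult_sys A X \<and>
    (\<forall>\<pi> :: ('h \<Rightarrow> 'h) \<Rightarrow> ('k::chilbert \<Rightarrow> 'k).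
       opsys_rep A X \<pi> \<and> nondegenerate A \<pi> \<longrightarrow>
       (\<exists>\<pi>t. opsys_rep At Xt \<pi>t \<and> (\<forall>x\<in>X. \<pi>t x = \<pi> x) \<and>
          (\<forall>\<rho>. opsys_rep At Xt \<rho> \<and> (\<forall>x\<in>X. \<rho> x = \<pi> x) \<longrightarrow> (\<forall>x\<in>Xt. \<rho> x = \<pi>t x))))"
proof -
  have opt: "cstar_opsys At Xt" using assms(2) unfolding unitization_def by blast
  have ideal: "\<And>a b. a \<in> A \<Longrightarrow> b \<in> At \<Longrightarrow> a \<circ> b \<in> A \<and> b \<circ> a \<in> A"
    using assms(2) unfolding unitization_def by blast
  have AXt: "\<And>a x. a \<in> A \<Longrightarrow> x \<in> Xt \<Longrightarrow> a \<circ> x \<in> X"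
    using assms(2) unfolding unitization_def by blast
  have XtA: "x \<circ> a \<in> X" if x: "x \<in> Xt" and a: "a \<in> A" for x a
  proof -
    have ix: "is_adj x (adj x)" "adj x \<in> Xt" using selfadjD[OF opsysD(6)[OF opt] x] by auto
    have ia: "is_adj a (adj a)" "adj a \<in> A" using selfadjD[OF opsysD(5)[OF assms(1)] a] by auto
    have z: "adj a \<circ> adj x \<in> X" by (rule AXt[OF ia(2) ix(2)])
    have "is_adj (adj a \<circ> adj x) (x \<circ> a)"
      by (rule is_adj_comp[OF is_adj_sym[OF ia(1)] is_adj_sym[OF ix(1)]])
    then have "adj (adj a \<circ> adj x) = x \<circ> a" by (rule adj_eq)
    moreover have "adj (adj a \<circ> adj x) \<in> X" using selfadjD[OF opsysD(6)[OF assms(1)] z] by blast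
    ultimately show ?thesis by simp
  qed
  have p1: "At \<subseteq> mult_alg A"
    using opsysD(1)[OF opt] ideal unfolding mult_alg_def BH_def by blast
  have p2: "Xt \<subseteq> mult_sys A X"
    using opsysD(2)[OF opt] XtA AXt unfolding mult_sys_def BH_def by blast
  have p3: "\<forall>\<pi> :: ('h \<Rightarrow> 'h) \<Rightarrow> ('k::chilbert \<Rightarrow> 'k).
       opsys_rep A X \<pi> \<and> nondegenerate A \<pi> \<longrightarrow>
       (\<exists>\<pi>t. opsys_rep At Xt \<pi>t \<and> (\<forall>x\<in>X. \<pi>t x = \<pi> x) \<and>
          (\<forall>\<rho>. opsys_rep At Xt \<rho> \<and> (\<forall>x\<in>X. \<rho> x = \<pi> x) \<longrightarrow> (\<forall>x\<in>Xt. \<rho> x = \<pi>t x)))"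
  proof (intro allI impI)
    fix \<pi> :: "('h \<Rightarrow> 'h) \<Rightarrow> ('k::chilbert \<Rightarrow> 'k)"
    assume h: "opsys_rep A X \<pi> \<and> nondegenerate A \<pi>"
    interpret E: ext_setting A X At Xt \<pi>
      using assms h by unfold_locales auto
    show "\<exists>\<pi>t. opsys_rep At Xt \<pi>t \<and> (\<forall>x\<in>X. \<pi>t x = \<pi> x) \<and>
          (\<forall>\<rho>. opsys_rep At Xt \<rho> \<and> (\<forall>x\<in>X. \<rho> x = \<pi> x) \<longrightarrow> (\<forall>x\<in>Xt. \<rho> x = \<pi>t x))"
      using E.rep_Tt E.Tt_X E.uniq by blast
  qed
  show ?thesis using p1 p2 p3 by blast
qed


end
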